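(* Assume $b\neq 0$ and $\int_0\frac{\Phi(u)}{|\Psi(u)|}\,\mathrm{d}u=\infty$ (divergence near $0$). Let $(Y_t,t\ge 0)$ be a CBI$(\Psi,\Phi)$ process. Then for every $x\ge 0$, under $\mathbb P_x$, $$r_t(1/Y_t)\xrightarrow[t\to\infty]{d}\mathrm{e}_1,$$ where $\mathrm{e}_1$ is an exponential random variable with parameter $1$ (with the convention $1/0=\infty$).
   Context: Let $\sigma\ge 0$, $b\in\mathbb R$, $\beta\ge 0$, and let $\pi,\nu$ be $\sigma$-finite measures on $(0,\infty)$ with $\int_0^\infty (z\wedge z^2)\pi(\mathrm{d}z)<\infty$ and $\int_0^\infty(1\wedge z)\nu(\mathrm{d}z)<\infty$. The branching mechanism is $\Psi(q)=bq+\frac12\sigma^2q^2+\int_0^\infty(e^{-qu}-1+qu)\pi(\mathrm{d}u)$ and the immigration mechanism is $\Phi(q)=\beta q+\int_0^\infty(1-e^{-qu})\nu(\mathrm{d}u)$, $q\ge 0$; it is assumed that $\Phi(q)>0$ for all $q>0$. For $\lambda\ge 0$, $t\mapsto v_t(\lambda)$ solves $\frac{\partial}{\partial t}v_t(\lambda)=-\Psi(v_t(\lambda))$, $v_0(\lambda)=\lambda$. A CBI$(\Psi,\Phi)$ process is a $[0,\infty)$-valued Markov process $(Y_t)$ with $\mathbb E_x[e^{-\lambda Y_t}]=\exp\big(-xv_t(\lambda)-r_t(\lambda)\big)$, where $\mathbb P_x,\mathbb E_x$ refer to the process started at $x\ge0$ and $r_t(\lambda):=\int_0^t\Phi(v_s(\lambda))\mathrm{d}s=\int_{v_t(\lambda)}^{\lambda}\frac{\Phi(u)}{\Psi(u)}\mathrm{d}u$.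 Also $r_t(\infty):=\lim_{\lambda\to\infty}r_t(\lambda)\in(0,\infty]$. *)

theory Defs
  imports "HOL-Probability.Probability"
begin

text \<open>Branching mechanism Psi and immigration mechanism Phi.
  The Levy measures pi, nu are Borel measures on the reals carried by (0,infinity).\<close>

definition Psi_mech :: "real \<Rightarrow> real \<Rightarrow> real measure \<Rightarrow> real \<Rightarrow> real" where
  "Psi_mech b \<sigma> \<pi> q = b * q + (1/2) * \<sigma>^2 * q^2
      + (\<integral>u. (exp (- q * u) - 1 + q * u) \<partial>\<pi>)"

definition Phi_mech :: "real \<Rightarrow> real measure \<Rightarrow> real \<Rightarrow> real" where
  "Phi_mech \<beta> \<nu> q = \<beta> * q + (\<integral>u. (1 - exp (- q * u)) \<partial>\<nu>)"

definition r_fun :: "(real \<Rightarrow> real) \<Rightarrow> (real \<Rightarrow> real \<Rightarrow> real) \<Rightarrow> real \<Rightarrow> real \<Rightarrow> real" where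
  "r_fun Phi v t l = integral {0..t} (\<lambda>s. Phi (v s l))"

definition r_inf :: "(real \<Rightarrow> real) \<Rightarrow> (real \<Rightarrow> real \<Rightarrow> real) \<Rightarrow> real \<Rightarrow> ereal" where
  "r_inf Phi v t = Lim at_top (\<lambda>l. ereal (r_fun Phi v t l))"

definition r_recip :: "(real \<Rightarrow> real) \<Rightarrow> (real \<Rightarrow> real \<Rightarrow> real) \<Rightarrow> real \<Rightarrow> real \<Rightarrow> ereal" where
  "r_recip Phi v t y = (if y = 0 then r_inf Phi v t else ereal (r_fun Phi v t (1 / y)))"

definition nat_filt :: "'a measure \<Rightarrow> (real \<Rightarrow> 'a \<Rightarrow> real) \<Rightarrow> real \<Rightarrow> 'a measure" where
  "nat_filt M Y s = sigma (space M)
     (\<Union>u\<in>{0..s}. {Y u -` A \<inter> space M | A. A \<in> sets borel})"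

text \<open>CBI(Psi,Phi) process: for each x >= 0, under P x the process Y is [0,infinity)-valued,
  starts at x, and is Markov w.r.t. its natural filtration with the CBI transition semigroup,
  i.e. E_x[exp(-l Y_{s+t}) | F_s] = exp(-Y_s v_t(l) - r_t(l)).\<close>

definition is_CBI :: "(real \<Rightarrow> real) \<Rightarrow> (real \<Rightarrow> real \<Rightarrow> real)
    \<Rightarrow> (real \<Rightarrow> 'a measure) \<Rightarrow> (real \<Rightarrow> 'a \<Rightarrow> real) \<Rightarrow> bool" where
  "is_CBI Phi v P Y \<longleftrightarrow>
     (\<forall>x\<ge>0. prob_space (P x)
        \<and> (\<forall>t\<ge>0. Y t \<in> borel_measurable (P x) \<and> (\<forall>\<omega>\<in>space (P x). Y t \<omega> \<ge> 0))
        \<and> (AE \<omega> in P x. Y 0 \<omega> = x)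
        \<and> (\<forall>s\<ge>0. \<forall>t\<ge>0. \<forall>l\<ge>0.
             AE \<omega> in P x. real_cond_exp (P x) (nat_filt (P x) Y s)
                               (\<lambda>\<omega>. exp (- l * Y (s + t) \<omega>)) \<omega>
                           = exp (- Y s \<omega> * v t l - r_fun Phi v t l)))"

end

theory Submission
  imports Defs
begin

lemma lim_param_integral:
  fixes g :: "real \<Rightarrow> 'b \<Rightarrow> real"
  assumes meas: "\<And>q. q \<in> S \<Longrightarrow> g q \<in> borel_measurable M"
    and w: "integrable M w"
    and bnd: "\<And>q. q \<in> S \<Longrightarrow> AE u in M. \<bar>g q u\<bar> \<le> w u"
    and lim: "AE u in M. ((\<lambda>q. g q u) \<longlongrightarrow> L u) (at x within S)"
    and Lm: "L \<in> borel_measurable M"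
  shows "((\<lambda>q. \<integral>u. g q u \<partial>M) \<longlongrightarrow> (\<integral>u. L u \<partial>M)) (at x within S)"
  unfolding tendsto_at_iff_sequentially
proof (intro allI impI)
  fix X :: "nat \<Rightarrow> real"
  assume X: "\<forall>i. X i \<in> S - {x}" and Xl: "X \<longlonglongrightarrow> x"
  have "(\<lambda>i. integral\<^sup>L M (g (X i))) \<longlonglongrightarrow> integral\<^sup>L M L"
  proof (rule integral_dominated_convergence[where w=w])
    show "L \<in> borel_measurable M" by fact
    show "g (X i) \<in> borel_measurable M" for i using X meas by auto
    show "integrable M w" by fact
    show "AE u in M. (\<lambda>i. g (X i) u) \<longlonglongrightarrow> L u"
      using lim
    proof (rule AE_mp, intro AE_I2 impI)
      fix u assume "((\<lambda>q. g q u) \<longlongrightarrow> L u) (at x within S)"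
      then show "(\<lambda>i. g (X i) u) \<longlonglongrightarrow> L u"
        using X Xl unfolding tendsto_at_iff_sequentially by (auto simp: o_def)
    qed
    show "AE u in M. norm (g (X i) u) \<le> w u" for i using bnd[of "X i"] X by auto
  qed
  then show "((\<lambda>q. \<integral>u. g q u \<partial>M) \<circ> X) \<longlonglongrightarrow> (\<integral>u. L u \<partial>M)" by (simp add: o_def)
qed

lemma cont_param_integral:
  fixes g :: "real \<Rightarrow> 'b \<Rightarrow> real"
  assumes meas: "\<And>q. q \<in> S \<Longrightarrow> g q \<in> borel_measurable M"
    and w: "integrable M w"
    and bnd: "\<And>q. q \<in> S \<Longrightarrow> AE u in M. \<bar>g q u\<bar> \<le> w u"
    and cont: "AE u in M. continuous_on S (\<lambda>q. g q u)"
  shows "continuous_on S (\<lambda>q. \<integral>u. g q u \<partial>M)"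
  unfolding continuous_on_def
proof
  fix x assume x: "x \<in> S"
  show "((\<lambda>q. \<integral>u. g q u \<partial>M) \<longlongrightarrow> (\<integral>u. g x u \<partial>M)) (at x within S)"
  proof (rule lim_param_integral[OF meas w bnd])
    show "AE u in M. ((\<lambda>q. g q u) \<longlongrightarrow> g x u) (at x within S)"
      using cont by eventually_elim (use x in \<open>auto simp: continuous_on_def\<close>)
    show "g x \<in> borel_measurable M" using meas x by auto
  qed auto
qed



lemma exp_quad_bound:
  fixes y :: real assumes y: "y \<ge> 0"
  shows "exp (-y) - 1 + y \<le> y^2/2"
proof -
  let ?f = "\<lambda>y::real. 1 - y + y^2/2 - exp (-y)"
  have "?f 0 \<le> ?f y"
  proof (rule DERIV_nonneg_imp_nondecreasing[OF y])
    fix x :: real assume "0 \<le> x" "x \<le> y"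
    have "(?f has_real_derivative (-1 + x + exp (-x))) (at x)"
      by (auto intro!: derivative_eq_intros simp: power2_eq_square)
    moreover have "0 \<le> -1 + x + exp (-x)" using exp_ge_add_one_self[of "-x"] by simp
    ultimately show "\<exists>d. (?f has_real_derivative d) (at x) \<and> 0 \<le> d" by blast
  qed
  then show ?thesis by simp
qed

lemma exp_lin_bounds:
  fixes y :: real assumes y: "y \<ge> 0"
  shows "0 \<le> exp (-y) - 1 + y" "exp (-y) - 1 + y \<le> y"
    "0 \<le> 1 - exp (-y)" "1 - exp (-y) \<le> y" "1 - exp (-y) \<le> 1"
  using exp_ge_add_one_self[of "-y"] y by auto

locale mechs =
  fixes \<sigma> b \<beta> :: real and \<pi> \<nu> :: "real measure"
  assumes beta_nonneg: "\<beta> \<ge> 0"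
      and pi_sets: "sets \<pi> = sets borel"
      and pi_supp: "emeasure \<pi> {..0} = 0"
      and pi_int: "(\<integral>\<^sup>+ z. ennreal (min z (z^2)) \<partial>\<pi>) < \<infinity>"
      and nu_sets: "sets \<nu> = sets borel"
      and nu_supp: "emeasure \<nu> {..0} = 0"
      and nu_int: "(\<integral>\<^sup>+ z. ennreal (min 1 z) \<partial>\<nu>) < \<infinity>"
begin

abbreviation "\<Psi> \<equiv> Psi_mech b \<sigma> \<pi>"
abbreviation "\<Phi> \<equiv> Phi_mech \<beta> \<nu>"

lemma pi_meas: "f \<in> borel_measurable borel \<Longrightarrow> f \<in> borel_measurable \<pi>"
  by (subst measurable_cong_sets[OF pi_sets refl])
lemma nu_meas: "f \<in> borel_measurable borel \<Longrightarrow> f \<in> borel_measurable \<nu>"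
  by (subst measurable_cong_sets[OF nu_sets refl])

lemma pi_AE_pos: "AE u in \<pi>. u > 0"
proof (rule AE_I')
  show "{..0} \<in> null_sets \<pi>" using pi_supp pi_sets by (auto simp: null_sets_def)
qed auto
lemma nu_AE_pos: "AE u in \<nu>. u > 0"
proof (rule AE_I')
  show "{..0} \<in> null_sets \<nu>" using nu_supp nu_sets by (auto simp: null_sets_def)
qed auto

lemma pi_w_int: "integrable \<pi> (\<lambda>u. min u (u^2))"
  apply (rule integrableI_nonneg)
    apply (auto intro!: pi_meas)[1]
   apply (rule AE_mp[OF pi_AE_pos]) apply (auto intro!: AE_I2)[1]
  using pi_int by simp
lemma nu_w_int: "integrable \<nu> (\<lambda>u. min 1 u)"
  apply (rule integrableI_nonneg)
    apply (auto intro!: nu_meas)[1]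
   apply (rule AE_mp[OF nu_AE_pos]) apply (auto intro!: AE_I2)[1]
  using nu_int by simp



definition gpsi :: "real \<Rightarrow> real \<Rightarrow> real" where "gpsi q u = exp (- q * u) - 1 + q * u"
definition gphi :: "real \<Rightarrow> real \<Rightarrow> real" where "gphi q u = 1 - exp (- q * u)"

lemma gpsi_meas: "gpsi q \<in> borel_measurable \<pi>"
  unfolding gpsi_def by (intro pi_meas) measurable
lemma gphi_meas: "gphi q \<in> borel_measurable \<nu>"
  unfolding gphi_def by (intro nu_meas) measurable

lemma gpsi_bound:
  assumes q: "0 \<le> q" "q \<le> c" and u: "u > 0"
  shows "\<bar>gpsi q u\<bar> \<le> max c (c^2) * min u (u^2)"
proof -
  have y: "q * u \<ge> 0" using q u by simp
  have a: "0 \<le> gpsi q u" "gpsi q u \<le> q * u" "gpsi q u \<le> (q*u)^2/2"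
    using exp_lin_bounds[OF y] exp_quad_bound[OF y] by (auto simp: gpsi_def)
  have c0: "c \<ge> 0" using q by simp
  show ?thesis
  proof (cases "u \<le> u^2")
    case True
    then have "min u (u^2) = u" by simp
    moreover have "q * u \<le> c * u" using q u by (intro mult_right_mono) auto
    moreover have "c * u \<le> max c (c^2) * u" using u by (intro mult_right_mono) auto
    ultimately show ?thesis using a by simp
  next
    case False
    then have "min u (u^2) = u^2" by simp
    moreover have "(q*u)^2/2 \<le> c^2 * u^2"
    proof -
      have "q^2 \<le> c^2" using q by (intro power_mono) auto
      then have "q^2 * u^2 \<le> c^2 * u^2" by (intro mult_right_mono) auto
      moreover have "(q*u)^2/2 \<le> q^2 * u^2" by (simp add: power_mult_distrib)
      ultimately show ?thesis by linarith
    qed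
    moreover have "c^2 * u^2 \<le> max c (c^2) * u^2" by (intro mult_right_mono) auto
    ultimately show ?thesis using a by simp
  qed
qed

lemma gphi_bound:
  assumes q: "0 \<le> q" "q \<le> c" and u: "u > 0"
  shows "\<bar>gphi q u\<bar> \<le> max 1 c * min 1 u"
proof -
  have y: "q * u \<ge> 0" using q u by simp
  have a: "0 \<le> gphi q u" "gphi q u \<le> q * u" "gphi q u \<le> 1"
    using exp_lin_bounds[OF y] by (auto simp: gphi_def)
  show ?thesis
  proof (cases "u \<le> 1")
    case True
    then have "min 1 u = u" by simp
    moreover have "q * u \<le> c * u" using q u by (intro mult_right_mono) auto
    moreover have "c * u \<le> max 1 c * u" using u by (intro mult_right_mono) auto
    ultimately show ?thesis using a by simp
  next
    case False
    then show ?thesis using a by simp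
  qed
qed

lemma gpsi_integrable: "q \<ge> 0 \<Longrightarrow> integrable \<pi> (gpsi q)"
  apply (rule Bochner_Integration.integrable_bound[OF integrable_mult_left[OF pi_w_int, of "max q (q^2)"] gpsi_meas])
  apply (rule AE_mp[OF pi_AE_pos])
  using gpsi_bound[of q q] by (auto intro!: AE_I2 simp: abs_mult mult.commute)

lemma gphi_integrable: "q \<ge> 0 \<Longrightarrow> integrable \<nu> (gphi q)"
  apply (rule Bochner_Integration.integrable_bound[OF integrable_mult_left[OF nu_w_int, of "max 1 q"] gphi_meas])
  apply (rule AE_mp[OF nu_AE_pos])
  using gphi_bound[of q q] by (auto intro!: AE_I2 simp: abs_mult mult.commute)

lemma Psi_eq: "\<Psi> q = b * q + (1/2) * \<sigma>^2 * q^2 + (\<integral>u. gpsi q u \<partial>\<pi>)"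
  unfolding Psi_mech_def gpsi_def by simp
lemma Phi_eq: "\<Phi> q = \<beta> * q + (\<integral>u. gphi q u \<partial>\<nu>)"
  unfolding Phi_mech_def gphi_def by simp

lemma Psi_0: "\<Psi> 0 = 0" by (simp add: Psi_eq gpsi_def)
lemma Phi_0: "\<Phi> 0 = 0" by (simp add: Phi_eq gphi_def)

lemma Psi_ge: "q \<ge> 0 \<Longrightarrow> \<Psi> q \<ge> b * q"
proof -
  assume q: "q \<ge> 0"
  have "0 \<le> (\<integral>u. gpsi q u \<partial>\<pi>)"
    by (rule integral_nonneg_AE, rule AE_mp[OF pi_AE_pos]) (use gpsi_bound[OF q order_refl] exp_lin_bounds q in \<open>auto simp: gpsi_def intro!: AE_I2\<close>)
  then show ?thesis unfolding Psi_eq by simp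
qed

lemma Phi_nonneg: "q \<ge> 0 \<Longrightarrow> \<Phi> q \<ge> 0"
proof -
  assume q: "q \<ge> 0"
  have "0 \<le> (\<integral>u. gphi q u \<partial>\<nu>)"
    by (rule integral_nonneg_AE, rule AE_mp[OF nu_AE_pos]) (use exp_lin_bounds q in \<open>auto simp: gphi_def intro!: AE_I2\<close>)
  then show ?thesis unfolding Phi_eq using beta_nonneg q by simp
qed

lemma Phi_mono: "0 \<le> q1 \<Longrightarrow> q1 \<le> q2 \<Longrightarrow> \<Phi> q1 \<le> \<Phi> q2"
proof -
  assume q: "0 \<le> q1" "q1 \<le> q2"
  have "(\<integral>u. gphi q1 u \<partial>\<nu>) \<le> (\<integral>u. gphi q2 u \<partial>\<nu>)"
    apply (rule integral_mono_AE[OF gphi_integrable gphi_integrable])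
    using q apply simp_all
    apply (rule AE_mp[OF nu_AE_pos], rule AE_I2)
    using q by (auto simp: gphi_def intro!: mult_right_mono)
  then show ?thesis unfolding Phi_eq using beta_nonneg q by (simp add: mult_left_mono add_mono)
qed

lemma Psi_cont: "continuous_on {0..c} \<Psi>"
proof -
  have "continuous_on {0..c} (\<lambda>q. \<integral>u. gpsi q u \<partial>\<pi>)"
  proof (rule cont_param_integral[where w="\<lambda>u. max c (c^2) * min u (u^2)"])
    show "gpsi q \<in> borel_measurable \<pi>" for q by (rule gpsi_meas)
    show "integrable \<pi> (\<lambda>u. max c (c^2) * min u (u^2))" by (intro integrable_mult_right pi_w_int)
    show "AE u in \<pi>. \<bar>gpsi q u\<bar> \<le> max c (c^2) * min u (u^2)" if "q \<in> {0..c}" for q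
      by (rule AE_mp[OF pi_AE_pos], rule AE_I2) (use that gpsi_bound[of q c] in auto)
    show "AE u in \<pi>. continuous_on {0..c} (\<lambda>q. gpsi q u)"
      by (intro AE_I2) (unfold gpsi_def, intro continuous_intros)
  qed
  then have "continuous_on {0..c} (\<lambda>q. b * q + (1/2) * \<sigma>^2 * q^2 + (\<integral>u. gpsi q u \<partial>\<pi>))"
    by (intro continuous_intros)
  moreover have "(\<lambda>q. b * q + (1/2) * \<sigma>^2 * q^2 + (\<integral>u. gpsi q u \<partial>\<pi>)) = \<Psi>"
    by (rule ext) (simp add: Psi_eq)
  ultimately show ?thesis by metis
qed

lemma Phi_cont: "continuous_on {0..c} \<Phi>"
proof -
  have "continuous_on {0..c} (\<lambda>q. \<integral>u. gphi q u \<partial>\<nu>)"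
  proof (rule cont_param_integral[where w="\<lambda>u. max 1 c * min 1 u"])
    show "gphi q \<in> borel_measurable \<nu>" for q by (rule gphi_meas)
    show "integrable \<nu> (\<lambda>u. max 1 c * min 1 u)" by (intro integrable_mult_right nu_w_int)
    show "AE u in \<nu>. \<bar>gphi q u\<bar> \<le> max 1 c * min 1 u" if "q \<in> {0..c}" for q
      by (rule AE_mp[OF nu_AE_pos], rule AE_I2) (use that gphi_bound[of q c] in auto)
    show "AE u in \<nu>. continuous_on {0..c} (\<lambda>q. gphi q u)"
      by (intro AE_I2) (unfold gphi_def, intro continuous_intros)
  qed
  then have "continuous_on {0..c} (\<lambda>q. \<beta> * q + (\<integral>u. gphi q u \<partial>\<nu>))"
    by (intro continuous_intros)
  moreover have "(\<lambda>q. \<beta> * q + (\<integral>u. gphi q u \<partial>\<nu>)) = \<Phi>"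
    by (rule ext) (simp add: Phi_eq)
  ultimately show ?thesis by metis
qed

lemma Psi_lin_lim: "((\<lambda>q. (\<integral>u. gpsi q u \<partial>\<pi>) / q) \<longlongrightarrow> 0) (at 0 within {0<..1})"
proof -
  have "((\<lambda>q. \<integral>u. gpsi q u / q \<partial>\<pi>) \<longlongrightarrow> (\<integral>u. 0 \<partial>\<pi>)) (at 0 within {0<..1})"
  proof (rule lim_param_integral[OF _ pi_w_int])
    show "(\<lambda>u. gpsi q u / q) \<in> borel_measurable \<pi>" for q
      using gpsi_meas by measurable
    show "AE u in \<pi>. \<bar>gpsi q u / q\<bar> \<le> min u (u^2)" if q: "q \<in> {0<..1}" for q
    proof (rule AE_mp[OF pi_AE_pos], intro AE_I2 impI)
      fix u :: real assume u: "u > 0"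
      have y: "q * u \<ge> 0" using q u by simp
      have a: "0 \<le> gpsi q u" "gpsi q u \<le> q * u" "gpsi q u \<le> (q*u)^2/2"
        using exp_lin_bounds[OF y] exp_quad_bound[OF y] by (auto simp: gpsi_def)
      have q0: "q > 0" "q \<le> 1" using q by auto
      have "gpsi q u / q \<le> u" using a q0 by (simp add: divide_le_eq mult.commute)
      moreover have "gpsi q u / q \<le> u^2"
      proof -
        have "(q*u)^2/2 \<le> q * u^2" using q0 u
          by (simp add: power2_eq_square field_simps)
        then show ?thesis using a q0 by (simp add: divide_le_eq mult.commute)
      qed
      moreover have "0 \<le> gpsi q u / q" using a q0 by simp
      ultimately show "\<bar>gpsi q u / q\<bar> \<le> min u (u^2)" by (simp only: abs_of_nonneg min.bounded_iff)
    qed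
    show "AE u in \<pi>. ((\<lambda>q. gpsi q u / q) \<longlongrightarrow> 0) (at 0 within {0<..1})"
    proof (rule AE_mp[OF pi_AE_pos], intro AE_I2 impI)
      fix u :: real assume u: "u > 0"
      show "((\<lambda>q. gpsi q u / q) \<longlongrightarrow> 0) (at 0 within {0<..1})"
      proof (rule tendsto_sandwich[where f="\<lambda>_. 0" and h="\<lambda>q. q * u^2 / 2"])
        show "\<forall>\<^sub>F q in at 0 within {0<..1}. 0 \<le> gpsi q u / q"
        proof (unfold eventually_at_filter, intro always_eventually allI impI)
          fix q :: real assume "q \<noteq> 0" "q \<in> {0<..1}"
          then have q: "q > 0" by simp
          have "0 \<le> gpsi q u" using exp_lin_bounds(1)[of "q*u"] q u by (simp add: gpsi_def)
          then show "0 \<le> gpsi q u / q" using q by simp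
        qed
        show "\<forall>\<^sub>F q in at 0 within {0<..1}. gpsi q u / q \<le> q * u^2 / 2"
        proof (unfold eventually_at_filter, intro always_eventually allI impI)
          fix q :: real assume "q \<noteq> 0" "q \<in> {0<..1}"
          then have q: "q > 0" by simp
          have "gpsi q u \<le> (q*u)^2/2" using exp_quad_bound[of "q*u"] q u by (simp add: gpsi_def)
          then show "gpsi q u / q \<le> q * u^2 / 2" using q
            by (simp add: divide_le_eq power2_eq_square field_simps)
        qed
        show "((\<lambda>_. 0) \<longlongrightarrow> 0) (at 0 within {0<..1})" by simp
        show "((\<lambda>q. q * u^2 / 2) \<longlongrightarrow> 0) (at 0 within {0<..1})"
          by (auto intro!: tendsto_eq_intros)
      qed
    qed
  qed simp
  then show ?thesis by (simp add: integral_divide_zero)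
qed

lemma Psi_near0:
  assumes b: "b \<noteq> 0"
  obtains \<delta> where "0 < \<delta>" "\<delta> \<le> 1" "\<And>q. 0 < q \<Longrightarrow> q \<le> \<delta> \<Longrightarrow> \<bar>\<Psi> q - b * q\<bar> \<le> \<bar>b\<bar> / 2 * q"
proof -
  have "((\<lambda>q. (1/2) * \<sigma>^2 * q + (\<integral>u. gpsi q u \<partial>\<pi>) / q) \<longlongrightarrow> (1/2) * \<sigma>^2 * 0 + 0) (at 0 within {0<..1})"
    by (intro tendsto_intros Psi_lin_lim)
  then have "\<forall>\<^sub>F q in at 0 within {0<..1}. dist ((1/2) * \<sigma>^2 * q + (\<integral>u. gpsi q u \<partial>\<pi>) / q) 0 < \<bar>b\<bar>/2"
    using b by (intro tendstoD) auto
  then obtain d where d: "d > 0" and dd: "\<And>q. q \<in> {0<..1} \<Longrightarrow> q \<noteq> 0 \<Longrightarrow> dist q 0 < d \<Longrightarrow>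
      dist ((1/2) * \<sigma>^2 * q + (\<integral>u. gpsi q u \<partial>\<pi>) / q) 0 < \<bar>b\<bar>/2"
    unfolding eventually_at by blast
  define \<delta> where "\<delta> = min 1 (d/2)"
  show ?thesis
  proof (rule that[of \<delta>])
    show "0 < \<delta>" "\<delta> \<le> 1" using d by (auto simp: \<delta>_def)
    fix q assume q: "0 < q" "q \<le> \<delta>"
    then have "q \<in> {0<..1}" "dist q 0 < d" using d by (auto simp: \<delta>_def dist_real_def)
    from dd[OF this(1) _ this(2)] q
    have "\<bar>(1/2) * \<sigma>^2 * q + (\<integral>u. gpsi q u \<partial>\<pi>) / q\<bar> < \<bar>b\<bar>/2" by simp
    then have "\<bar>((1/2) * \<sigma>^2 * q + (\<integral>u. gpsi q u \<partial>\<pi>) / q) * q\<bar> \<le> \<bar>b\<bar>/2 * q"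
      using q by (simp add: abs_mult)
    moreover have "((1/2) * \<sigma>^2 * q + (\<integral>u. gpsi q u \<partial>\<pi>) / q) * q = \<Psi> q - b * q"
      using q by (simp add: Psi_eq field_simps power2_eq_square)
    ultimately show "\<bar>\<Psi> q - b * q\<bar> \<le> \<bar>b\<bar> / 2 * q" by simp
  qed
qed

end


locale cbi = mechs +
  fixes v :: "real \<Rightarrow> real \<Rightarrow> real" and P :: "real \<Rightarrow> 'a measure" and Y :: "real \<Rightarrow> 'a \<Rightarrow> real"
  assumes Phi_pos: "\<And>q. q > 0 \<Longrightarrow> \<Phi> q > 0"
      and v_init: "\<And>l. l \<ge> 0 \<Longrightarrow> v 0 l = l"
      and v_ode: "\<And>l t. l \<ge> 0 \<Longrightarrow> t \<ge> 0 \<Longrightarrow>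
                    ((\<lambda>s. v s l) has_real_derivative (- \<Psi> (v t l))) (at t within {0..})"
      and b_ne: "b \<noteq> 0"
      and diverge: "\<And>\<epsilon>. \<epsilon> > 0 \<Longrightarrow>
                    (\<integral>\<^sup>+ u. indicator {0<..<\<epsilon>} u * ennreal (\<Phi> u / \<bar>\<Psi> u\<bar>) \<partial>lborel) = \<infinity>"
      and CBI: "is_CBI \<Phi> v P Y"
begin

abbreviation "rr \<equiv> r_fun \<Phi> v"

lemma CBI_prob: "x \<ge> 0 \<Longrightarrow> prob_space (P x)"
  using CBI unfolding is_CBI_def by blast
lemma CBI_meas: "x \<ge> 0 \<Longrightarrow> t \<ge> 0 \<Longrightarrow> Y t \<in> borel_measurable (P x)"
  using CBI unfolding is_CBI_def by blast
lemma CBI_nonneg: "x \<ge> 0 \<Longrightarrow> t \<ge> 0 \<Longrightarrow> \<omega> \<in> space (P x) \<Longrightarrow> Y t \<omega> \<ge> 0"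
  using CBI unfolding is_CBI_def by blast
lemma CBI_init: "x \<ge> 0 \<Longrightarrow> AE \<omega> in P x. Y 0 \<omega> = x"
  using CBI unfolding is_CBI_def by blast
lemma CBI_markov: "x \<ge> 0 \<Longrightarrow> s \<ge> 0 \<Longrightarrow> t \<ge> 0 \<Longrightarrow> l \<ge> 0 \<Longrightarrow>
   AE \<omega> in P x. real_cond_exp (P x) (nat_filt (P x) Y s) (\<lambda>\<omega>. exp (- l * Y (s + t) \<omega>)) \<omega>
                 = exp (- Y s \<omega> * v t l - rr t l)"
  using CBI unfolding is_CBI_def by blast

lemma lap:
  assumes x: "x \<ge> 0" and t: "t \<ge> 0" and l: "l \<ge> 0"
  shows "(\<integral>\<omega>. exp (- l * Y t \<omega>) \<partial>P x) = exp (- x * v t l - rr t l)"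
proof -
  interpret M: prob_space "P x" using CBI_prob[OF x] .
  define F where "F = nat_filt (P x) Y 0"
  have C: "(\<Union>u\<in>{0..0::real}. {Y u -` A \<inter> space (P x) | A. A \<in> sets borel}) \<subseteq> Pow (space (P x))"
    by auto
  have sub: "subalgebra (P x) F"
    unfolding subalgebra_def
  proof
    show "space F = space (P x)" unfolding F_def nat_filt_def using C by (simp add: space_measure_of_conv)
    have "sets F = sigma_sets (space (P x)) (\<Union>u\<in>{0..0::real}. {Y u -` A \<inter> space (P x) | A. A \<in> sets borel})"
      unfolding F_def nat_filt_def using C by (simp add: sets_measure_of)
    also have "\<dots> \<subseteq> sets (P x)"
    proof (rule sets.sigma_sets_subset)
      show "(\<Union>u\<in>{0..0::real}. {Y u -` A \<inter> space (P x) | A. A \<in> sets borel}) \<subseteq> sets (P x)"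
        using CBI_meas[OF x, of 0] by (auto intro: measurable_sets)
    qed
    finally show "sets F \<subseteq> sets (P x)" .
  qed
  interpret S: finite_measure_subalgebra "P x" F
    by unfold_locales (rule sub)
  have Ym: "Y t \<in> borel_measurable (P x)" "Y 0 \<in> borel_measurable (P x)"
    using CBI_meas[OF x] t by auto
  have intg: "integrable (P x) (\<lambda>\<omega>. exp (- l * Y t \<omega>))"
  proof (rule M.integrable_const_bound[where B=1])
    show "AE \<omega> in P x. norm (exp (- l * Y t \<omega>)) \<le> 1"
      using CBI_nonneg[OF x t] l by (auto intro!: AE_I2 simp: mult_nonneg_nonneg)
    show "(\<lambda>\<omega>. exp (- l * Y t \<omega>)) \<in> borel_measurable (P x)" using Ym by measurable
  qed
  have mk: "AE \<omega> in P x. real_cond_exp (P x) F (\<lambda>\<omega>. exp (- l * Y t \<omega>)) \<omega>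
                 = exp (- x * v t l - rr t l)"
    using CBI_markov[OF x order_refl t l] CBI_init[OF x] unfolding F_def
    by eventually_elim simp
  have "(\<integral>\<omega>. exp (- l * Y t \<omega>) \<partial>P x) = (\<integral>\<omega>. real_cond_exp (P x) F (\<lambda>\<omega>. exp (- l * Y t \<omega>)) \<omega> \<partial>P x)"
    using S.real_cond_exp_int(2)[OF intg] by simp
  also have "\<dots> = (\<integral>\<omega>. exp (- x * v t l - rr t l) \<partial>P x)"
    by (rule integral_cong_AE) (use mk in auto)
  also have "\<dots> = exp (- x * v t l - rr t l)" by (simp add: M.prob_space)
  finally show ?thesis .
qed


lemma lap_int:
  assumes x: "x \<ge> 0" and t: "t \<ge> 0" and l: "l \<ge> 0"
  shows "integrable (P x) (\<lambda>\<omega>. exp (- l * Y t \<omega>))"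
proof -
  interpret M: prob_space "P x" using CBI_prob[OF x] .
  show ?thesis
  proof (rule M.integrable_const_bound[where B=1])
    show "AE \<omega> in P x. norm (exp (- l * Y t \<omega>)) \<le> 1"
      using CBI_nonneg[OF x t] l by (auto intro!: AE_I2 simp: mult_nonneg_nonneg)
    show "(\<lambda>\<omega>. exp (- l * Y t \<omega>)) \<in> borel_measurable (P x)" using CBI_meas[OF x t] by measurable
  qed
qed

lemma L_nonneg:
  assumes x: "x \<ge> 0" and t: "t \<ge> 0" and l: "l \<ge> 0"
  shows "0 \<le> x * v t l + rr t l"
proof -
  interpret M: prob_space "P x" using CBI_prob[OF x] .
  have "(\<integral>\<omega>. exp (- l * Y t \<omega>) \<partial>P x) \<le> (\<integral>\<omega>. 1 \<partial>P x)"
    by (rule integral_mono[OF lap_int[OF x t l]])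
       (use CBI_nonneg[OF x t] l in \<open>auto simp: mult_nonneg_nonneg\<close>)
  then have "exp (- x * v t l - rr t l) \<le> 1" using lap[OF x t l] M.prob_space by simp
  then show ?thesis by simp
qed

lemma rr_nonneg: "t \<ge> 0 \<Longrightarrow> l \<ge> 0 \<Longrightarrow> 0 \<le> rr t l"
  using L_nonneg[of 0 t l] by simp

lemma v_nonneg:
  assumes t: "t \<ge> 0" and l: "l \<ge> 0" shows "0 \<le> v t l"
proof (rule ccontr)
  assume "\<not> 0 \<le> v t l"
  then have vn: "v t l < 0" by simp
  define x where "x = (rr t l + 1) / (- v t l)"
  have x: "x \<ge> 0" unfolding x_def using vn rr_nonneg[OF t l] by (intro divide_nonneg_pos) auto
  have "x * v t l = - (rr t l + 1)" unfolding x_def using vn by (simp add: field_simps)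
  then show False using L_nonneg[OF x t l] by simp
qed

lemma L_mono:
  assumes x: "x \<ge> 0" and t: "t \<ge> 0" and l: "0 \<le> l1" "l1 \<le> l2"
  shows "x * v t l1 + rr t l1 \<le> x * v t l2 + rr t l2"
proof -
  have l2: "0 \<le> l2" using l by simp
  have "(\<integral>\<omega>. exp (- l2 * Y t \<omega>) \<partial>P x) \<le> (\<integral>\<omega>. exp (- l1 * Y t \<omega>) \<partial>P x)"
    by (rule integral_mono[OF lap_int[OF x t l2] lap_int[OF x t l(1)]])
       (use CBI_nonneg[OF x t] l in \<open>auto intro!: mult_right_mono\<close>)
  then show ?thesis using lap[OF x t l(1)] lap[OF x t l2] by simp
qed

lemma rr_mono: "t \<ge> 0 \<Longrightarrow> 0 \<le> l1 \<Longrightarrow> l1 \<le> l2 \<Longrightarrow> rr t l1 \<le> rr t l2"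
  using L_mono[of 0 t l1 l2] by simp

lemma v_mono:
  assumes t: "t \<ge> 0" and l: "0 \<le> l1" "l1 \<le> l2"
  shows "v t l1 \<le> v t l2"
proof (rule ccontr)
  assume "\<not> v t l1 \<le> v t l2"
  then have d: "v t l1 - v t l2 > 0" by simp
  define x where "x = (\<bar>rr t l2 - rr t l1\<bar> + 1) / (v t l1 - v t l2)"
  have x: "x \<ge> 0" unfolding x_def using d by simp
  have "x * (v t l1 - v t l2) = \<bar>rr t l2 - rr t l1\<bar> + 1" unfolding x_def using d by simp
  then show False using L_mono[OF x t l] by (simp add: algebra_simps)
qed

lemma L_jensen:
  assumes x: "x \<ge> 0" and t: "t \<ge> 0" and l: "l \<ge> 0" and p: "p \<ge> 1"
  shows "x * v t (p * l) + rr t (p * l) \<le> p * (x * v t l + rr t l)"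
proof -
  interpret M: prob_space "P x" using CBI_prob[OF x] .
  have pl: "p * l \<ge> 0" using p l by simp
  have eq: "exp (- l * Y t \<omega>) powr p = exp (- (p * l) * Y t \<omega>)" for \<omega>
    by (simp add: powr_def)
  have "(M.expectation (\<lambda>\<omega>. exp (- l * Y t \<omega>))) powr p \<le> M.expectation (\<lambda>\<omega>. exp (- l * Y t \<omega>) powr p)"
  proof (rule M.jensens_inequality[where I="{0<..}" and a=0 and b=0])
    show "integrable (P x) (\<lambda>\<omega>. exp (- l * Y t \<omega>))" by (rule lap_int[OF x t l])
    show "AE \<omega> in P x. exp (- l * Y t \<omega>) \<in> {0<..}" by simp
    show "{0<..} = {0::real<..<0} \<or> {0<..} = {0::real<..} \<or> {0<..} = {..<0::real} \<or> {0<..} = (UNIV::real set)" by simp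
    show "integrable (P x) (\<lambda>\<omega>. exp (- l * Y t \<omega>) powr p)" unfolding eq by (rule lap_int[OF x t pl])
    show "convex_on {0<..} (\<lambda>z::real. z powr p)" by (rule powr_convex[OF p])
  qed
  then have "exp (- x * v t l - rr t l) powr p \<le> exp (- x * v t (p * l) - rr t (p * l))"
    unfolding eq lap[OF x t l] lap[OF x t pl] .
  then have "exp (p * (- x * v t l - rr t l)) \<le> exp (- x * v t (p * l) - rr t (p * l))"
    by (simp add: powr_def)
  then show ?thesis by (simp add: algebra_simps)
qed

lemma rr_jensen: "t \<ge> 0 \<Longrightarrow> l \<ge> 0 \<Longrightarrow> p \<ge> 1 \<Longrightarrow> rr t (p * l) \<le> p * rr t l"
  using L_jensen[of 0 t l p] by simp

lemma v_jensen:
  assumes t: "t \<ge> 0" and l: "l \<ge> 0" and p: "p \<ge> 1"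
  shows "v t (p * l) \<le> p * v t l"
proof (rule ccontr)
  assume "\<not> v t (p * l) \<le> p * v t l"
  then have d: "v t (p * l) - p * v t l > 0" by simp
  define x where "x = (\<bar>p * rr t l - rr t (p * l)\<bar> + 1) / (v t (p * l) - p * v t l)"
  have x: "x \<ge> 0" unfolding x_def using d by simp
  have "x * (v t (p * l) - p * v t l) = \<bar>p * rr t l - rr t (p * l)\<bar> + 1" unfolding x_def using d by simp
  then show False using L_jensen[OF x t l p] by (simp add: algebra_simps)
qed

lemma rr_small:
  assumes t: "t \<ge> 0" and w: "w > 0"
  shows "\<exists>l>0. rr t l \<le> w"
proof -
  interpret M: prob_space "P 0" using CBI_prob[of 0] by simp
  have "(\<lambda>n. \<integral>\<omega>. exp (- (1 / real (Suc n)) * Y t \<omega>) \<partial>P 0) \<longlonglongrightarrow> (\<integral>\<omega>. 1 \<partial>P 0)"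
  proof (rule integral_dominated_convergence[where w="\<lambda>_. 1"])
    show "(\<lambda>\<omega>. 1::real) \<in> borel_measurable (P 0)" by simp
    show "(\<lambda>\<omega>. exp (- (1 / real (Suc n)) * Y t \<omega>)) \<in> borel_measurable (P 0)" for n
      using CBI_meas[of 0 t] t by measurable
    show "integrable (P 0) (\<lambda>_. 1::real)" by simp
    show "AE \<omega> in P 0. (\<lambda>n. exp (- (1 / real (Suc n)) * Y t \<omega>)) \<longlonglongrightarrow> 1"
    proof (rule AE_I2)
      fix \<omega>
      have "(\<lambda>n. 1 / real (Suc n)) \<longlonglongrightarrow> 0" using LIMSEQ_inverse_real_of_nat by (simp add: divide_inverse)
      then have "(\<lambda>n. exp (- (1 / real (Suc n)) * Y t \<omega>)) \<longlonglongrightarrow> exp (- 0 * Y t \<omega>)"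
        by (intro tendsto_intros)
      then show "(\<lambda>n. exp (- (1 / real (Suc n)) * Y t \<omega>)) \<longlonglongrightarrow> 1" by simp
    qed
    show "AE \<omega> in P 0. norm (exp (- (1 / real (Suc n)) * Y t \<omega>)) \<le> 1" for n
      using CBI_nonneg[of 0 t] t by (auto intro!: AE_I2 simp: mult_nonneg_nonneg)
  qed
  moreover have "(\<integral>\<omega>. exp (- (1 / real (Suc n)) * Y t \<omega>) \<partial>P 0) = exp (- rr t (1 / real (Suc n)))" for n
    using lap[of 0 t "1 / real (Suc n)"] t by simp
  ultimately have lim: "(\<lambda>n. exp (- rr t (1 / real (Suc n)))) \<longlonglongrightarrow> 1"
    using M.prob_space by simp
  have "exp (- w) < 1" using w by simp
  from order_tendstoD(1)[OF lim this] obtain n where "exp (- w) < exp (- rr t (1 / real (Suc n)))"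
    by (auto simp: eventually_sequentially)
  then have "rr t (1 / real (Suc n)) \<le> w" by simp
  then show ?thesis by (intro exI[of _ "1 / real (Suc n)"]) auto
qed

lemma r_inf_ge:
  assumes t: "t \<ge> 0" and l: "l \<ge> 0"
  shows "ereal (rr t l) \<le> r_inf \<Phi> v t"
proof -
  define S where "S = (SUP l\<in>{0..}. ereal (rr t l))"
  have lim: "((\<lambda>l. ereal (rr t l)) \<longlongrightarrow> S) at_top"
  proof (rule order_tendstoI)
    fix a assume "a < S"
    then obtain l0 where l0: "l0 \<ge> 0" "a < ereal (rr t l0)" unfolding S_def less_SUP_iff by auto
    show "\<forall>\<^sub>F l in at_top. a < ereal (rr t l)"
      using eventually_ge_at_top[of l0]
    proof eventually_elim
      case (elim l)
      then show ?case using l0 rr_mono[OF t l0(1) elim] by (meson ereal_less_eq(3) less_le_trans)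
    qed
  next
    fix a assume "S < a"
    show "\<forall>\<^sub>F l in at_top. ereal (rr t l) < a"
      using eventually_ge_at_top[of 0]
    proof eventually_elim
      case (elim l)
      then have "ereal (rr t l) \<le> S" unfolding S_def by (intro SUP_upper) auto
      then show ?case using \<open>S < a\<close> by simp
    qed
  qed
  then have "r_inf \<Phi> v t = S" unfolding r_inf_def by (intro tendsto_Lim) auto
  moreover have "ereal (rr t l) \<le> S" unfolding S_def using l by (intro SUP_upper) auto
  ultimately show ?thesis by simp
qed

lemma upclosed_borel:
  fixes A :: "real set"
  assumes up: "\<And>x y. x \<in> A \<Longrightarrow> x \<le> y \<Longrightarrow> y \<in> A"
  shows "A \<in> sets borel"
proof (cases "A = {}")
  case True then show ?thesis by simp
next
  case ne: False
  show ?thesis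
  proof (cases "bdd_below A")
    case False
    have "y \<in> A" for y
    proof -
      from False obtain x where "x \<in> A" "x < y" unfolding bdd_below_def by (meson not_le)
      then show "y \<in> A" using up by auto
    qed
    then have "A = UNIV" by auto
    then show ?thesis by simp
  next
    case True
    define a where "a = Inf A"
    have ge: "x \<in> A \<Longrightarrow> a \<le> x" for x unfolding a_def using True by (intro cInf_lower)
    have gt: "a < y \<Longrightarrow> y \<in> A" for y
    proof -
      assume "a < y"
      then obtain x where "x \<in> A" "x < y" unfolding a_def using cInf_less_iff[OF ne True] by auto
      then show "y \<in> A" using up by auto
    qed
    show ?thesis
    proof (cases "a \<in> A")
      case True
      have "A = {a..}"
      proof (intro set_eqI iffI)
        fix y assume "y \<in> {a..}" then show "y \<in> A" using True up by auto
      qed (use ge in auto)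
      then show ?thesis by simp
    next
      case False
      have "A = {a<..}"
      proof (intro set_eqI iffI)
        fix y assume "y \<in> A" then show "y \<in> {a<..}" using False ge[of y] by (cases "y = a") auto
      qed (use gt in auto)
      then show ?thesis by simp
    qed
  qed
qed

lemma r_recip_anti:
  assumes t: "t \<ge> 0" and y: "y1 \<le> y2"
  shows "r_recip \<Phi> v t (max 0 y2) \<le> r_recip \<Phi> v t (max 0 y1)"
proof (cases "y2 \<le> 0")
  case True
  then show ?thesis using y by (simp add: r_recip_def max_def)
next
  case False
  show ?thesis
  proof (cases "y1 \<le> 0")
    case True
    then show ?thesis using False t by (simp add: r_recip_def max_def r_inf_ge)
  next
    case False2: False
    have "rr t (1 / y2) \<le> rr t (1 / y1)"
      using False False2 y t by (intro rr_mono) (auto simp: frac_le)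
    then show ?thesis using False False2 by (simp add: r_recip_def max_def)
  qed
qed

lemma event_meas:
  assumes x: "x \<ge> 0" and t: "t \<ge> 0"
  shows "{\<omega> \<in> space (P x). r_recip \<Phi> v t (Y t \<omega>) \<le> ereal z} \<in> sets (P x)"
proof -
  define A where "A = {y::real. r_recip \<Phi> v t (max 0 y) \<le> ereal z}"
  have A: "A \<in> sets borel" unfolding A_def
  proof (rule upclosed_borel, clarify)
    fix y1 y2 assume "r_recip \<Phi> v t (max 0 y1) \<le> ereal z" "y1 \<le> y2"
    then show "r_recip \<Phi> v t (max 0 y2) \<le> ereal z" using r_recip_anti[OF t, of y1 y2] by simp
  qed
  have "{\<omega> \<in> space (P x). r_recip \<Phi> v t (Y t \<omega>) \<le> ereal z} = Y t -` A \<inter> space (P x)"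
    using CBI_nonneg[OF x t] unfolding A_def by (auto simp: max_def)
  also have "\<dots> \<in> sets (P x)" using CBI_meas[OF x t] A by (rule measurable_sets)
  finally show ?thesis .
qed

end


lemma cont_atLeast0:
  fixes g :: "real \<Rightarrow> real"
  assumes "\<And>c. continuous_on {0..c} g"
  shows "continuous_on {0..} g"
  unfolding continuous_on_def
proof
  fix x :: real assume x: "x \<in> {0..}"
  have "(g \<longlongrightarrow> g x) (at x within {0..x+1})"
    using assms[of "x+1"] x unfolding continuous_on_def by auto
  moreover have "at x within {0..x+1} = at x within {0..}"
    by (rule at_within_nhd[where S="{..<x+1}"]) (use x in auto)
  ultimately show "(g \<longlongrightarrow> g x) (at x within {0..})" by simp
qed

context cbi
begin

definition dl :: real where
  "dl = (SOME d. 0 < d \<and> d \<le> 1 \<and> (\<forall>q. 0 < q \<longrightarrow> q \<le> d \<longrightarrow> \<bar>\<Psi> q - b * q\<bar> \<le> \<bar>b\<bar> / 2 * q))"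

lemma dl_props: "0 < dl" "dl \<le> 1" "\<And>q. 0 < q \<Longrightarrow> q \<le> dl \<Longrightarrow> \<bar>\<Psi> q - b * q\<bar> \<le> \<bar>b\<bar> / 2 * q"
proof -
  obtain d where "0 < d" "d \<le> 1" "\<And>q. 0 < q \<Longrightarrow> q \<le> d \<Longrightarrow> \<bar>\<Psi> q - b * q\<bar> \<le> \<bar>b\<bar> / 2 * q"
    using Psi_near0[OF b_ne] by blast
  then have ex: "\<exists>d. 0 < d \<and> d \<le> 1 \<and> (\<forall>q. 0 < q \<longrightarrow> q \<le> d \<longrightarrow> \<bar>\<Psi> q - b * q\<bar> \<le> \<bar>b\<bar> / 2 * q)"
    by blast
  note someI_ex[OF ex, folded dl_def]
  then show "0 < dl" "dl \<le> 1" "\<And>q. 0 < q \<Longrightarrow> q \<le> dl \<Longrightarrow> \<bar>\<Psi> q - b * q\<bar> \<le> \<bar>b\<bar> / 2 * q"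
    by auto
qed

lemma Psi_abs_lower: "0 < q \<Longrightarrow> q \<le> dl \<Longrightarrow> \<bar>b\<bar> / 2 * q \<le> \<bar>\<Psi> q\<bar>"
  using dl_props(3)[of q] by (cases "b > 0") (auto simp: abs_if split: if_splits)

lemma Psi_pos_case: "b > 0 \<Longrightarrow> 0 < q \<Longrightarrow> q \<le> dl \<Longrightarrow> \<Psi> q \<le> 3 * b / 2 * q"
  using dl_props(3)[of q] by (auto simp: abs_if split: if_splits)

lemma Psi_neg_case: "b < 0 \<Longrightarrow> 0 < q \<Longrightarrow> q \<le> dl \<Longrightarrow> \<Psi> q < 0"
proof -
  assume h: "b < 0" "0 < q" "q \<le> dl"
  have "b * q < 0" using h by (simp add: mult_neg_pos)
  then show ?thesis using dl_props(3)[OF h(2,3)] h by (auto simp: abs_if split: if_splits)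
qed

lemma Psi_pos_case2: "b > 0 \<Longrightarrow> 0 < q \<Longrightarrow> q \<le> dl \<Longrightarrow> \<Psi> q > 0"
proof -
  assume h: "b > 0" "0 < q" "q \<le> dl"
  have "b * q > 0" using h by simp
  moreover have "b * q \<le> \<Psi> q" using Psi_ge[of q] h by simp
  ultimately show ?thesis by linarith
qed

lemma Psi_nz: "0 < q \<Longrightarrow> q \<le> dl \<Longrightarrow> \<Psi> q \<noteq> 0"
proof -
  assume h: "0 < q" "q \<le> dl"
  have "\<bar>b\<bar> / 2 * q > 0" using h b_ne by simp
  then show ?thesis using Psi_abs_lower[OF h] by auto
qed

lemma sgn_Psi: "0 < q \<Longrightarrow> q \<le> dl \<Longrightarrow> sgn (\<Psi> q) = sgn b"
  using Psi_neg_case[of q] Psi_pos_case2[of q] b_ne by (cases "b > 0") (auto simp: sgn_if)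

definition ff :: "real \<Rightarrow> real" where "ff q = \<Phi> q / \<bar>\<Psi> q\<bar>"

lemma ff_nonneg: "0 \<le> q \<Longrightarrow> 0 \<le> ff q"
  unfolding ff_def using Phi_nonneg by simp

lemma Phi_cont0: "continuous_on {0..} \<Phi>"
  by (rule cont_atLeast0[OF Phi_cont])
lemma Psi_cont0: "continuous_on {0..} \<Psi>"
  by (rule cont_atLeast0[OF Psi_cont])

lemma ff_cont: "continuous_on {0<..dl} ff"
proof -
  have "continuous_on {0<..dl} \<Phi>" by (rule continuous_on_subset[OF Phi_cont0]) auto
  moreover have "continuous_on {0<..dl} \<Psi>" by (rule continuous_on_subset[OF Psi_cont0]) auto
  ultimately show ?thesis unfolding ff_def
    by (intro continuous_intros) (auto dest: Psi_nz)
qed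

lemma ff_cont_ab: "0 < a \<Longrightarrow> a \<le> a' \<Longrightarrow> b' \<le> dl \<Longrightarrow> continuous_on {a'..b'} ff"
  by (rule continuous_on_subset[OF ff_cont]) auto

lemma ff_int: "0 < a \<Longrightarrow> a \<le> b' \<Longrightarrow> b' \<le> dl \<Longrightarrow> ff integrable_on {a..b'}"
  by (rule integrable_continuous_interval, rule ff_cont_ab) auto

definition Gf :: "real \<Rightarrow> real" where "Gf q = integral {q..dl} ff"

lemma Gf_diff:
  assumes "0 < p" "p \<le> q" "q \<le> dl"
  shows "Gf p - Gf q = integral {p..q} ff"
  using Henstock_Kurzweil_Integration.integral_combine[OF assms(2,3) ff_int[of p dl]] assms unfolding Gf_def by auto

lemma Gf_diff_nonneg:
  assumes "0 < p" "p \<le> q" "q \<le> dl"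
  shows "0 \<le> Gf p - Gf q"
  unfolding Gf_diff[OF assms] using assms by (intro integral_nonneg ff_int ff_nonneg) auto

lemma Gf_deriv:
  assumes a: "0 < a" and q: "q \<in> {a..dl}"
  shows "(Gf has_real_derivative (- ff q)) (at q within {a..dl})"
proof -
  have c: "continuous_on {a..dl} ff" using a by (intro ff_cont_ab) auto
  have "((\<lambda>x. integral {a..dl} ff - integral {a..x} ff) has_real_derivative (0 - ff q)) (at q within {a..dl})"
    by (intro derivative_intros integral_has_real_derivative[OF c q])
  then have "((\<lambda>x. integral {a..dl} ff - integral {a..x} ff) has_real_derivative (- ff q)) (at q within {a..dl})"
    by simp
  then show ?thesis
  proof (rule has_field_derivative_transform_within[where d=1])
    fix x assume x: "x \<in> {a..dl}"
    show "integral {a..dl} ff - integral {a..x} ff = Gf x"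
      using Henstock_Kurzweil_Integration.integral_combine[of a x dl ff] x ff_int[of a dl] a unfolding Gf_def by auto
  qed (use q in auto)
qed

lemma v_cont: "l \<ge> 0 \<Longrightarrow> continuous_on {0..} (\<lambda>s. v s l)"
  unfolding continuous_on_eq_continuous_within
  using v_ode by (auto intro: DERIV_continuous)

lemma rr_def': "rr t l = integral {0..t} (\<lambda>s. \<Phi> (v s l))"
  unfolding r_fun_def ..

lemma Phiv_cont: "l \<ge> 0 \<Longrightarrow> continuous_on {0..} (\<lambda>s. \<Phi> (v s l))"
  by (rule continuous_on_compose2[OF Phi_cont0 v_cont]) (auto intro: v_nonneg)

lemma Phiv_int: "l \<ge> 0 \<Longrightarrow> 0 \<le> a \<Longrightarrow> (\<lambda>s. \<Phi> (v s l)) integrable_on {a..t}"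
  by (rule integrable_continuous_interval, rule continuous_on_subset[OF Phiv_cont]) auto

lemma rr_time_mono:
  assumes l: "l \<ge> 0" and s: "0 \<le> s" "s \<le> t"
  shows "rr s l \<le> rr t l"
proof -
  have "rr t l = rr s l + integral {s..t} (\<lambda>s. \<Phi> (v s l))"
    unfolding rr_def' using Henstock_Kurzweil_Integration.integral_combine[OF s Phiv_int[OF l, of 0 t]] by simp
  moreover have "0 \<le> integral {s..t} (\<lambda>s. \<Phi> (v s l))"
    using s l by (intro integral_nonneg Phiv_int Phi_nonneg v_nonneg) auto
  ultimately show ?thesis by simp
qed

lemma Gform:
  assumes l: "l > 0" and t: "t \<ge> 0" and a: "a > 0"
    and path: "\<And>s. 0 \<le> s \<Longrightarrow> s \<le> t \<Longrightarrow> v s l \<in> {a..dl}"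
  shows "Gf (v t l) - Gf l = sgn b * rr t l"
proof -
  have der: "((\<lambda>s. Gf (v s l)) has_vector_derivative (sgn b * \<Phi> (v s l))) (at s within {0..t})"
    if s: "s \<in> {0..t}" for s
  proof -
    have vs: "v s l \<in> {a..dl}" using path s by auto
    have d1: "(Gf has_real_derivative (- ff (v s l))) (at (v s l) within ((\<lambda>s. v s l) ` {0..t}))"
      by (rule DERIV_subset[OF Gf_deriv[OF a vs]]) (use path in auto)
    have d2: "((\<lambda>s. v s l) has_real_derivative (- \<Psi> (v s l))) (at s within {0..t})"
      by (rule DERIV_subset[OF v_ode]) (use l s in auto)
    have "((Gf \<circ> (\<lambda>s. v s l)) has_real_derivative (- ff (v s l)) * (- \<Psi> (v s l))) (at s within {0..t})"
      by (rule DERIV_image_chain[OF d1 d2])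
    moreover have "(- ff (v s l)) * (- \<Psi> (v s l)) = sgn b * \<Phi> (v s l)"
    proof -
      have q: "0 < v s l" "v s l \<le> dl" using vs a by auto
      have e: "\<Psi> (v s l) / \<bar>\<Psi> (v s l)\<bar> = sgn b"
        using sgn_Psi[OF q] by (metis real_sgn_eq)
      have "(- ff (v s l)) * (- \<Psi> (v s l)) = \<Phi> (v s l) * (\<Psi> (v s l) / \<bar>\<Psi> (v s l)\<bar>)"
        unfolding ff_def by simp
      then show ?thesis unfolding e by simp
    qed
    ultimately show ?thesis
      by (simp add: o_def has_real_derivative_iff_has_vector_derivative)
  qed
  have "((\<lambda>s. sgn b * \<Phi> (v s l)) has_integral (Gf (v t l) - Gf (v 0 l))) {0..t}"
    by (rule fundamental_theorem_of_calculus[OF t der]) auto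
  then have "integral {0..t} (\<lambda>s. sgn b * \<Phi> (v s l)) = Gf (v t l) - Gf (v 0 l)"
    by (rule integral_unique)
  then have "integral {0..t} (\<lambda>s. sgn b * \<Phi> (v s l)) = Gf (v t l) - Gf l"
    using v_init l by simp
  then show ?thesis unfolding rr_def' by simp
qed

end


context cbi
begin

lemma int_inv:
  fixes p q :: real
  assumes "0 < p" "p \<le> q"
  shows "((\<lambda>u. 1 / u) has_integral (ln q - ln p)) {p..q}"
proof -
  have "((\<lambda>u. 1 / u) has_integral (ln q - ln p)) {p..q}" if "\<And>u. u \<in> {p..q} \<Longrightarrow> (ln has_vector_derivative 1 / u) (at u within {p..q})"
    using fundamental_theorem_of_calculus[of p q ln "\<lambda>u. 1 / u"] assms that by simp
  moreover
  have "(ln has_vector_derivative 1 / u) (at u within {p..q})" if u: "u \<in> {p..q}" for u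
  proof -
  have "u > 0" using assms u by auto
  then have "(ln has_real_derivative 1 / u) (at u)" by (rule DERIV_ln_divide)
  then show "(ln has_vector_derivative 1 / u) (at u within {p..q})"
    by (simp add: has_real_derivative_iff_has_vector_derivative has_vector_derivative_at_within)
  qed
  ultimately show ?thesis by blast
qed

lemma small_int:
  assumes R: "R \<ge> 1" and e: "\<epsilon> > 0"
  shows "\<exists>\<eta>. 0 < \<eta> \<and> \<eta> \<le> dl \<and> (\<forall>p q. 0 < p \<longrightarrow> p \<le> q \<longrightarrow> q \<le> \<eta> \<longrightarrow> q \<le> R * p \<longrightarrow> integral {p..q} ff \<le> \<epsilon>)"
proof -
  define L where "L = ln R + 1"
  define c where "c = (\<epsilon> / L) * \<bar>b\<bar> / 2"
  have lnR: "ln R \<ge> 0" using R by simp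
  have c: "c > 0" unfolding c_def L_def using e b_ne lnR by (intro divide_pos_pos mult_pos_pos) auto
  have "(\<Phi> \<longlongrightarrow> \<Phi> 0) (at 0 within {0..dl})"
    using Phi_cont[of dl] dl_props(1) unfolding continuous_on_def by auto
  then have "\<forall>\<^sub>F x in at 0 within {0..dl}. dist (\<Phi> x) (\<Phi> 0) < c" using c by (rule tendstoD)
  then obtain d where d: "d > 0" and dd: "\<And>x. x \<in> {0..dl} \<Longrightarrow> x \<noteq> 0 \<Longrightarrow> dist x 0 < d \<Longrightarrow> dist (\<Phi> x) (\<Phi> 0) < c"
    unfolding eventually_at by blast
  define \<eta> where "\<eta> = min dl (d/2)"
  have eta: "0 < \<eta>" "\<eta> \<le> dl" unfolding \<eta>_def using d dl_props(1) by auto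
  have e1: "\<eta> \<in> {0..dl}" "\<eta> \<noteq> 0" "dist \<eta> 0 < d" using eta d by (auto simp: \<eta>_def dist_real_def)
  have Phi_eta: "\<Phi> \<eta> \<le> c"
    using dd[OF e1] Phi_0 by (simp add: dist_real_def)
  show ?thesis
  proof (intro exI[of _ \<eta>] conjI allI impI eta)
    fix p q assume pq: "0 < p" "p \<le> q" "q \<le> \<eta>" "q \<le> R * p"
    have bnd: "ff u \<le> (2 * c / \<bar>b\<bar>) * (1 / u)" if u: "u \<in> {p..q}" for u
    proof -
      have u0: "0 < u" "u \<le> dl" using u pq eta by auto
      have "\<Phi> u \<le> c" using Phi_mono[of u \<eta>] u0 u pq Phi_eta by auto
      moreover have "\<bar>b\<bar> / 2 * u \<le> \<bar>\<Psi> u\<bar>" by (rule Psi_abs_lower[OF u0])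
      moreover have "0 < \<bar>b\<bar> / 2 * u" using u0 b_ne by simp
      ultimately have "\<Phi> u / \<bar>\<Psi> u\<bar> \<le> c / (\<bar>b\<bar> / 2 * u)"
        using Phi_nonneg[of u] u0 by (intro frac_le) auto
      also have "\<dots> = (2 * c / \<bar>b\<bar>) * (1 / u)" by (simp add: field_simps)
      finally show ?thesis unfolding ff_def .
    qed
    have "integral {p..q} ff \<le> integral {p..q} (\<lambda>u. (2 * c / \<bar>b\<bar>) * (1 / u))"
    proof (rule integral_le)
      show "ff integrable_on {p..q}" using pq eta by (intro ff_int) auto
      show "(\<lambda>u. (2 * c / \<bar>b\<bar>) * (1 / u)) integrable_on {p..q}"
        using has_integral_cmul[OF int_inv[OF pq(1,2)], of "2 * c / \<bar>b\<bar>"] by (auto simp: integrable_on_def)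
    qed (rule bnd)
    also have "\<dots> = (2 * c / \<bar>b\<bar>) * integral {p..q} (\<lambda>u. 1 / u)"
      by (rule integral_mult_right)
    also have "\<dots> = (2 * c / \<bar>b\<bar>) * (ln q - ln p)"
      using integral_unique[OF int_inv[OF pq(1,2)]] by simp
    also have "ln q - ln p \<le> ln R"
    proof -
      have "q / p \<le> R" using pq by (simp add: divide_le_eq mult.commute)
      moreover have "0 < q / p" using pq by simp
      ultimately have "ln (q / p) \<le> ln R" by simp
      then show ?thesis using pq by (simp add: ln_div)
    qed
    then have "(2 * c / \<bar>b\<bar>) * (ln q - ln p) \<le> (2 * c / \<bar>b\<bar>) * ln R"
      using c by (intro mult_left_mono) auto
    also have "(2 * c / \<bar>b\<bar>) * ln R = \<epsilon> * (ln R / (ln R + 1))"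
    proof -
      have h1: "ln R + 1 > 0" "\<bar>b\<bar> > 0" using lnR b_ne by auto
      have h2: "L > 0" using h1 unfolding L_def by simp
      have "2 * c / \<bar>b\<bar> = \<epsilon> / L" unfolding c_def using h2 h1 by (simp add: field_simps)
      then have "2 * c / \<bar>b\<bar> = \<epsilon> / (ln R + 1)" unfolding L_def .
      then show ?thesis by simp
    qed
    also have "\<dots> \<le> \<epsilon> * 1" using e lnR by (intro mult_left_mono) auto
    finally show "integral {p..q} ff \<le> \<epsilon>" by simp
  qed
qed

lemma int_anti:
  assumes "0 < q" "q \<le> a" "a \<le> \<eta>" "\<eta> \<le> dl"
  shows "integral {a..\<eta>} ff \<le> integral {q..\<eta>} ff"
proof -
  have "integral {q..a} ff + integral {a..\<eta>} ff = integral {q..\<eta>} ff"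
    using assms by (intro Henstock_Kurzweil_Integration.integral_combine ff_int) auto
  moreover have "0 \<le> integral {q..a} ff" using assms by (intro integral_nonneg ff_int ff_nonneg) auto
  ultimately show ?thesis by linarith
qed

lemma div_int:
  assumes eta: "0 < \<eta>" "\<eta> \<le> dl"
  shows "\<exists>a. 0 < a \<and> a \<le> \<eta> \<and> (\<forall>q. 0 < q \<longrightarrow> q \<le> a \<longrightarrow> M < integral {q..\<eta>} ff)"
proof (rule ccontr)
  assume H: "\<not> ?thesis"
  have Bd: "integral {a..\<eta>} ff \<le> M" if a: "0 < a" "a \<le> \<eta>" for a
  proof -
    from H a obtain q where q: "0 < q" "q \<le> a" "integral {q..\<eta>} ff \<le> M" by (auto simp: not_less)
    then show ?thesis using int_anti[OF q(1,2) a(2) eta(2)] by linarith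
  qed
  have M0: "0 \<le> M" using Bd[OF eta(1) order_refl] by simp
  define F where "F n u = ennreal (indicator {\<eta> / real (Suc n)..\<eta>} u * ff u)" for n u
  have Fpos: "0 < \<eta> / real (Suc n)" "\<eta> / real (Suc n) \<le> \<eta>" for n
  proof -
    show "0 < \<eta> / real (Suc n)" using eta by simp
    have "\<eta> / real (Suc n) \<le> \<eta> / 1" using eta by (intro divide_left_mono) auto
    then show "\<eta> / real (Suc n) \<le> \<eta>" by simp
  qed
  have Fm: "F n \<in> borel_measurable lborel" for n
  proof -
    have "(\<lambda>u. indicator {\<eta> / real (Suc n)..\<eta>} u *\<^sub>R ff u) \<in> borel_measurable borel"
      by (rule borel_measurable_continuous_on_indicator[OF _ ff_cont_ab[OF Fpos(1)[of n] order_refl eta(2)]]) simp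
    then show ?thesis unfolding F_def by (simp add: measurable_lborel1)
  qed
  have Finc: "incseq F"
  proof (rule incseq_SucI, rule le_funI)
    fix n u
    have le: "\<eta> / real (Suc (Suc n)) \<le> \<eta> / real (Suc n)" using eta by (intro divide_left_mono) auto
    show "F n u \<le> F (Suc n) u"
    proof (cases "u \<in> {\<eta> / real (Suc n)..\<eta>}")
      case True
      with le have "u \<in> {\<eta> / real (Suc (Suc n))..\<eta>}" by auto
      with True show ?thesis unfolding F_def by simp
    next
      case False
      then show ?thesis unfolding F_def by simp
    qed
  qed
  have FI: "integral\<^sup>N lborel (F n) = ennreal (integral {\<eta> / real (Suc n)..\<eta>} ff)" for n
    unfolding F_def
  proof (rule nn_integral_has_integral_lebesgue)
    show "\<And>x. x \<in> {\<eta> / real (Suc n)..\<eta>} \<Longrightarrow> 0 \<le> ff x" using Fpos[of n] by (auto intro!: ff_nonneg)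
    show "(ff has_integral integral {\<eta> / real (Suc n)..\<eta>} ff) {\<eta> / real (Suc n)..\<eta>}"
      using Fpos[of n] eta by (intro integrable_integral ff_int) auto
  qed
  have "(\<integral>\<^sup>+ u. indicator {0<..<\<eta>} u * ennreal (\<Phi> u / \<bar>\<Psi> u\<bar>) \<partial>lborel) \<le> (\<integral>\<^sup>+ u. (SUP n. F n u) \<partial>lborel)"
  proof (rule nn_integral_mono)
    fix u :: real
    show "indicator {0<..<\<eta>} u * ennreal (\<Phi> u / \<bar>\<Psi> u\<bar>) \<le> (SUP n. F n u)"
    proof (cases "u \<in> {0<..<\<eta>}")
      case True
      obtain n where n: "\<eta> / u < real n" using reals_Archimedean2 by blast
      have "\<eta> / real (Suc n) \<le> u" using n True
        by (simp add: divide_le_eq field_simps)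
      then have "F n u = ennreal (ff u)" using True unfolding F_def by auto
      then have "ennreal (ff u) \<le> (SUP n. F n u)" by (metis SUP_upper UNIV_I)
      then show ?thesis using True unfolding ff_def by simp
    next
      case False
      then show ?thesis by simp
    qed
  qed
  also have "\<dots> = (SUP n. integral\<^sup>N lborel (F n))"
    by (rule nn_integral_monotone_convergence_SUP[OF Finc Fm])
  also have "\<dots> \<le> ennreal M"
  proof (rule SUP_least)
    fix n show "integral\<^sup>N lborel (F n) \<le> ennreal M"
      unfolding FI using Bd[OF Fpos[of n]] by (simp add: ennreal_leI)
  qed
  finally have "\<top> \<le> ennreal M" using diverge[OF eta(1)] by simp
  then show False by (simp add: top_unique)
qed

end


context cbi
begin

lemma v_deriv_at:
  assumes l: "l \<ge> 0" and s: "s > 0"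
  shows "((\<lambda>s. v s l) has_real_derivative (- \<Psi> (v s l))) (at s)"
proof -
  have "at s within {0..} = at s" by (rule at_within_interior) (use s in simp)
  then show ?thesis using v_ode[OF l, of s] s by simp
qed

lemma v_cont_ab: "l \<ge> 0 \<Longrightarrow> 0 \<le> a \<Longrightarrow> continuous_on {a..c} (\<lambda>s. v s l)"
  by (rule continuous_on_subset[OF v_cont]) auto

subsection \<open>Subcritical case\<close>

lemma v_decr:
  assumes b: "b > 0" and l: "l \<ge> 0" and s: "0 \<le> s1" "s1 \<le> s2"
  shows "v s2 l \<le> v s1 l"
proof (rule DERIV_nonpos_imp_decreasing_open[OF s(2)])
  fix x assume x: "s1 < x" "x < s2"
  have "0 \<le> b * v x l" using b v_nonneg[of x l] x s l by simp
  also have "\<dots> \<le> \<Psi> (v x l)" using Psi_ge[of "v x l"] v_nonneg[of x l] x s l by simp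
  finally show "\<exists>y. ((\<lambda>s. v s l) has_real_derivative y) (at x) \<and> y \<le> 0"
    using v_deriv_at[OF l, of x] x s by (intro exI[of _ "- \<Psi> (v x l)"]) auto
qed (rule v_cont_ab[OF l s(1)])

lemma v_le_init: "b > 0 \<Longrightarrow> l \<ge> 0 \<Longrightarrow> s \<ge> 0 \<Longrightarrow> v s l \<le> l"
  using v_decr[of l 0 s] v_init[of l] by simp

lemma v_lower_pos:
  assumes b: "b > 0" and l: "0 < l" "l \<le> dl" and s: "s \<ge> 0"
  shows "l * exp (- (3 * b / 2) * s) \<le> v s l"
proof -
  define C where "C = 3 * b / 2"
  let ?h = "\<lambda>x. v x l * exp (C * x)"
  have "?h 0 \<le> ?h s"
  proof (rule DERIV_nonneg_imp_increasing_open[OF s])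
    fix x assume x: "0 < x" "x < s"
    have dv: "((\<lambda>s. v s l) has_real_derivative - \<Psi> (v x l)) (at x)" using v_deriv_at[of l x] l x by simp
    have de: "((\<lambda>x. exp (C * x)) has_real_derivative exp (C * x) * C) (at x)"
      by (auto intro!: derivative_eq_intros)
    have d: "(?h has_real_derivative (- \<Psi> (v x l) * exp (C * x) + v x l * (exp (C * x) * C))) (at x)"
      using DERIV_mult[OF dv de] by (simp add: algebra_simps)
    have vx: "0 \<le> v x l" "v x l \<le> dl" using v_nonneg[of x l] v_le_init[OF b, of l x] l x by auto
    have "\<Psi> (v x l) \<le> C * v x l"
    proof (cases "v x l = 0")
      case True then show ?thesis by (simp add: Psi_0)
    next
      case False then show ?thesis using Psi_pos_case[OF b, of "v x l"] vx unfolding C_def by simp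
    qed
    then have "0 \<le> - \<Psi> (v x l) * exp (C * x) + v x l * (exp (C * x) * C)"
      by (simp add: algebra_simps)
    then show "\<exists>y. (?h has_real_derivative y) (at x) \<and> 0 \<le> y" using d by blast
  next
    show "continuous_on {0..s} ?h"
      by (intro continuous_intros v_cont_ab) (use l in auto)
  qed
  then have "l \<le> v s l * exp (C * s)" using v_init[of l] l by simp
  then have "l * exp (- C * s) \<le> v s l * exp (C * s) * exp (- C * s)"
    by (intro mult_right_mono) auto
  also have "\<dots> = v s l" by (simp add: exp_minus field_simps)
  finally show ?thesis unfolding C_def .
qed

lemma v_upper_pos:
  assumes b: "b > 0" and l: "0 \<le> l" and s: "s \<ge> 0"
  shows "v s l \<le> l * exp (- b * s)"
proof -
  let ?h = "\<lambda>x. v x l * exp (b * x)"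
  have "?h s \<le> ?h 0"
  proof (rule DERIV_nonpos_imp_decreasing_open[OF s])
    fix x assume x: "0 < x" "x < s"
    have dv: "((\<lambda>s. v s l) has_real_derivative - \<Psi> (v x l)) (at x)" using v_deriv_at[of l x] l x by simp
    have de: "((\<lambda>x. exp (b * x)) has_real_derivative exp (b * x) * b) (at x)"
      by (auto intro!: derivative_eq_intros)
    have d: "(?h has_real_derivative (- \<Psi> (v x l) * exp (b * x) + v x l * (exp (b * x) * b))) (at x)"
      using DERIV_mult[OF dv de] by (simp add: algebra_simps)
    have "b * v x l \<le> \<Psi> (v x l)" using Psi_ge[of "v x l"] v_nonneg[of x l] l x by simp
    then have "- \<Psi> (v x l) * exp (b * x) + v x l * (exp (b * x) * b) \<le> 0"
      by (simp add: algebra_simps)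
    then show "\<exists>y. (?h has_real_derivative y) (at x) \<and> y \<le> 0" using d by blast
  next
    show "continuous_on {0..s} ?h"
      by (intro continuous_intros v_cont_ab) (use l in auto)
  qed
  then have "v s l * exp (b * s) \<le> l" using v_init[OF l] by simp
  then have "v s l * exp (b * s) * exp (- b * s) \<le> l * exp (- b * s)"
    by (intro mult_right_mono) auto
  then show ?thesis by (simp add: exp_minus field_simps)
qed

lemma path_pos:
  assumes b: "b > 0" and l: "0 < l" "l \<le> dl" and t: "t \<ge> 0"
  shows "Gf (v t l) - Gf l = rr t l"
proof -
  have "Gf (v t l) - Gf l = sgn b * rr t l"
  proof (rule Gform[OF l(1) t, where a="l * exp (- (3 * b / 2) * t)"])
    show "0 < l * exp (- (3 * b / 2) * t)" using l by simp
    fix s assume s: "0 \<le> s" "s \<le> t"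
    have "l * exp (- (3 * b / 2) * t) \<le> l * exp (- (3 * b / 2) * s)"
      using l b s by (intro mult_left_mono) auto
    also have "\<dots> \<le> v s l" by (rule v_lower_pos[OF b l s(1)])
    finally show "v s l \<in> {l * exp (- (3 * b / 2) * t)..dl}"
      using v_le_init[OF b, of l s] l s by auto
  qed
  then show ?thesis using b by simp
qed

lemma B1_pos:
  assumes b: "b > 0" and eta: "\<eta> > 0"
  shows "\<forall>\<^sub>F t in at_top. w < rr t \<eta>"
proof -
  define e where "e = min \<eta> dl"
  have e: "0 < e" "e \<le> dl" "e \<le> \<eta>" unfolding e_def using eta dl_props by auto
  obtain a where a: "0 < a" "a \<le> dl" and aa: "\<And>q. 0 < q \<Longrightarrow> q \<le> a \<Longrightarrow> w + Gf e < integral {q..dl} ff"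
    using div_int[OF dl_props(1) order_refl, of "w + Gf e"] by blast
  define T where "T = max 0 (ln (e / a) / b)"
  show ?thesis
    using eventually_ge_at_top[of T]
  proof eventually_elim
    case (elim t)
    have t: "t \<ge> 0" using elim unfolding T_def by simp
    have "v t e \<le> e * exp (- b * t)" by (rule v_upper_pos[OF b _ t]) (use e in simp)
    also have "\<dots> \<le> a"
    proof -
      have "ln (e / a) \<le> b * t" using elim b unfolding T_def by (simp add: divide_le_eq mult.commute)
      then have "exp (ln (e / a)) \<le> exp (b * t)" by simp
      then have "e / a \<le> exp (b * t)" using e a by simp
      then have "e \<le> a * exp (b * t)" using a by (simp add: divide_le_eq mult.commute)
      then have "e * exp (- b * t) \<le> a * exp (b * t) * exp (- b * t)" by (intro mult_right_mono) auto
      also have "a * exp (b * t) * exp (- b * t) = a" by (simp add: mult.assoc flip: exp_add)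
      finally show ?thesis .
    qed
    finally have va: "v t e \<le> a" .
    have vp: "0 < v t e" using v_lower_pos[OF b e(1,2) t] e by (smt (verit) exp_gt_zero mult_pos_pos)
    have "w + Gf e < Gf (v t e)" using aa[OF vp va] unfolding Gf_def .
    then have "w < rr t e" using path_pos[OF b e(1,2) t] by simp
    also have "rr t e \<le> rr t \<eta>" using rr_mono[OF t, of e \<eta>] e by simp
    finally show ?case .
  qed
qed

lemma B2_pos:
  assumes b: "b > 0" and K: "K \<ge> 1" and e: "\<epsilon> > 0"
  shows "\<exists>\<eta>>0. \<forall>t\<ge>0. \<forall>\<mu>>0. K * \<mu> \<le> \<eta> \<longrightarrow> rr t (K * \<mu>) - rr t (\<mu> / K) \<le> \<epsilon> \<and> v t (K * \<mu>) \<le> \<epsilon>"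
proof -
  have K2: "K^2 \<ge> 1" using K by (simp add: one_le_power)
  obtain \<eta>1 where eta1: "0 < \<eta>1" "\<eta>1 \<le> dl"
    and sm: "\<And>p q. 0 < p \<Longrightarrow> p \<le> q \<Longrightarrow> q \<le> \<eta>1 \<Longrightarrow> q \<le> K^2 * p \<Longrightarrow> integral {p..q} ff \<le> \<epsilon>"
    using small_int[OF K2 e] by blast
  define \<eta> where "\<eta> = min \<eta>1 \<epsilon>"
  show ?thesis
  proof (intro exI[of _ \<eta>] conjI allI impI)
    show "0 < \<eta>" unfolding \<eta>_def using eta1 e by simp
    fix t \<mu> :: real assume t: "0 \<le> t" and mu: "0 < \<mu>" and Kmu: "K * \<mu> \<le> \<eta>"
    define l1 where "l1 = \<mu> / K"
    define l2 where "l2 = K * \<mu>"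
    have l12a: "0 < l1" "l2 = K^2 * l1" "l2 \<le> \<eta>1"
      using K mu Kmu eta1 unfolding l1_def l2_def \<eta>_def by (auto simp: power2_eq_square)
    have l12b: "l1 \<le> l2" using l12a K2 by (metis mult_le_cancel_right1 less_imp_le not_le)
    have l12: "0 < l1" "l1 \<le> l2" "l2 \<le> \<eta>1" "l2 \<le> dl" "l2 = K^2 * l1" "l1 \<le> dl"
      using l12a(1,2,3) l12b eta1 by linarith+
    have p1: "Gf (v t l1) - Gf l1 = rr t l1" by (rule path_pos[OF b l12(1) l12(6) t])
    have p2: "Gf (v t l2) - Gf l2 = rr t l2" by (rule path_pos[OF b _ l12(4) t]) (use l12(1,2) in linarith)
    have i1: "Gf l1 - Gf l2 \<le> \<epsilon>"
      using Gf_diff[of l1 l2] sm[of l1 l2] l12 by simp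
    have vv: "0 < v t l1" "v t l1 \<le> v t l2" "v t l2 \<le> dl"
    proof -
      show "0 < v t l1" using v_lower_pos[OF b l12(1) l12(6) t] l12 by (smt (verit) exp_gt_zero mult_pos_pos)
      show "v t l1 \<le> v t l2" using v_mono[OF t, of l1 l2] l12 by simp
      show "v t l2 \<le> dl" using v_le_init[OF b, of l2 t] l12 t by simp
    qed
    have i2: "0 \<le> Gf (v t l1) - Gf (v t l2)" by (rule Gf_diff_nonneg[OF vv])
    show "rr t (K * \<mu>) - rr t (\<mu> / K) \<le> \<epsilon>"
      using p1 p2 i1 i2 unfolding l1_def l2_def by linarith
    show "v t (K * \<mu>) \<le> \<epsilon>"
      using v_le_init[OF b, of l2 t] l12 t Kmu unfolding l2_def \<eta>_def by simp
  qed
qed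

end


context cbi
begin

subsection \<open>Supercritical case\<close>

lemma FI:
  assumes b: "b < 0" and eta: "0 < \<eta>" "\<eta> \<le> dl" and l: "\<eta> \<le> l" and s: "0 \<le> s"
  shows "\<eta> \<le> v s l"
proof (rule ccontr)
  assume "\<not> \<eta> \<le> v s l"
  then have lt: "v s l < \<eta>" by simp
  have l0: "l \<ge> 0" using eta l by simp
  define T where "T = {x \<in> {0..s}. \<eta> \<le> v x l}"
  have cl: "closed T" unfolding T_def
    by (rule continuous_on_closed_Collect_le) (auto intro: v_cont_ab[OF l0])
  have bd: "bounded T" unfolding T_def
    by (rule bounded_subset[OF compact_imp_bounded[OF compact_Icc[of 0 s]]]) auto
  have cpt: "compact T" using cl bd by (simp add: compact_eq_bounded_closed)
  have "0 \<in> T" unfolding T_def using s l v_init[OF l0] by simp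
  then obtain \<tau> where tau: "\<tau> \<in> T" and tmax: "\<And>y. y \<in> T \<Longrightarrow> y \<le> \<tau>"
    using compact_attains_sup[OF cpt] by blast
  have t0: "0 \<le> \<tau>" "\<tau> \<le> s" "\<eta> \<le> v \<tau> l" using tau unfolding T_def by auto
  have ts: "\<tau> < s" using t0 lt by (cases "\<tau> = s") auto
  have after: "\<And>y. \<tau> < y \<Longrightarrow> y \<le> s \<Longrightarrow> v y l < \<eta>"
  proof -
    fix y assume y: "\<tau> < y" "y \<le> s"
    show "v y l < \<eta>"
    proof (rule ccontr)
      assume "\<not> v y l < \<eta>"
      then have "y \<in> T" unfolding T_def using y t0 by auto
      then show False using tmax y by force
    qed
  qed
  show False
  proof (cases "v \<tau> l = \<eta>")
    case True
    have "0 < - \<Psi> (v \<tau> l)" using Psi_neg_case[OF b eta] True by simp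
    from has_real_derivative_pos_inc_right[OF v_ode[OF l0 t0(1)] this]
    obtain d where d: "d > 0" and dd: "\<And>h. h > 0 \<Longrightarrow> \<tau> + h \<in> {0..} \<Longrightarrow> h < d \<Longrightarrow> v \<tau> l < v (\<tau> + h) l"
      by blast
    define h where "h = min (d/2) (s - \<tau>)"
    have h: "h > 0" "h < d" "\<tau> + h \<le> s" "\<tau> + h \<in> {0..}" unfolding h_def using d ts t0 by auto
    have "\<eta> < v (\<tau> + h) l" using dd[OF h(1) h(4) h(2)] True by simp
    moreover have "v (\<tau> + h) l < \<eta>" using after[of "\<tau> + h"] h by simp
    ultimately show False by simp
  next
    case False
    then have gt: "v \<tau> l - \<eta> > 0" using t0 by simp
    have "continuous (at \<tau> within {0..}) (\<lambda>s. v s l)"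
      using v_cont[OF l0] t0 unfolding continuous_on_eq_continuous_within by auto
    then obtain d where d: "d > 0" and dd: "\<And>y. y \<in> {0..} \<Longrightarrow> dist y \<tau> < d \<Longrightarrow> dist (v y l) (v \<tau> l) < v \<tau> l - \<eta>"
      unfolding continuous_within_eps_delta using gt by blast
    define h where "h = min (d/2) (s - \<tau>)"
    have h: "h > 0" "h < d" "\<tau> + h \<le> s" "\<tau> + h \<in> {0..}" unfolding h_def using d ts t0 by auto
    have "dist (v (\<tau> + h) l) (v \<tau> l) < v \<tau> l - \<eta>" using dd[OF h(4)] h by (simp add: dist_real_def)
    then have "\<eta> < v (\<tau> + h) l" by (simp add: dist_real_def abs_if split: if_splits)
    moreover have "v (\<tau> + h) l < \<eta>" using after[of "\<tau> + h"] h by simp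
    ultimately show False by simp
  qed
qed

lemma B1_neg:
  assumes b: "b < 0" and eta: "\<eta> > 0"
  shows "\<forall>\<^sub>F t in at_top. w < rr t \<eta>"
proof -
  define e where "e = min \<eta> dl"
  have e: "0 < e" "e \<le> dl" "e \<le> \<eta>" unfolding e_def using eta dl_props by auto
  have Pe: "\<Phi> e > 0" using Phi_pos e by simp
  show ?thesis
    using eventually_ge_at_top[of "max 0 (w / \<Phi> e + 1)"]
  proof eventually_elim
    case (elim t)
    have t: "t \<ge> 0" using elim by simp
    have "integral {0..t} (\<lambda>_. \<Phi> e) \<le> integral {0..t} (\<lambda>s. \<Phi> (v s e))"
    proof (rule integral_le)
      show "(\<lambda>s. \<Phi> (v s e)) integrable_on {0..t}" using e by (intro Phiv_int) auto
      fix s assume "s \<in> {0..t}"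
      then show "\<Phi> e \<le> \<Phi> (v s e)" using FI[OF b e(1,2) order_refl, of s] e by (intro Phi_mono) auto
    qed (intro integrable_continuous_interval continuous_on_const)
    then have "t * \<Phi> e \<le> rr t e" unfolding rr_def' using t by simp
    moreover have "w < t * \<Phi> e"
    proof -
      have "w / \<Phi> e < t" using elim by simp
      then show ?thesis using Pe by (simp add: divide_less_eq mult.commute)
    qed
    moreover have "rr t e \<le> rr t \<eta>" using rr_mono[OF t, of e \<eta>] e by simp
    ultimately show ?case by linarith
  qed
qed

lemma B2_neg:
  assumes b: "b < 0" and K: "K \<ge> 1" and w: "w \<ge> 0" and e: "\<epsilon> > 0"
  shows "\<exists>\<eta>>0. \<forall>t\<ge>0. \<forall>\<mu>>0. K * \<mu> \<le> \<eta> \<longrightarrow> rr t (K * \<mu>) \<le> K^2 * w \<longrightarrow>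
           rr t (K * \<mu>) - rr t (\<mu> / K) \<le> \<epsilon> \<and> v t (K * \<mu>) \<le> \<epsilon>"
proof -
  have K2: "K^2 \<ge> 1" using K by (simp add: one_le_power)
  obtain \<eta>1 where eta1: "0 < \<eta>1" "\<eta>1 \<le> dl"
    and sm: "\<And>p q. 0 < p \<Longrightarrow> p \<le> q \<Longrightarrow> q \<le> \<eta>1 \<Longrightarrow> q \<le> K^2 * p \<Longrightarrow> integral {p..q} ff \<le> \<epsilon>"
    using small_int[OF K2 e] by blast
  define \<eta>2 where "\<eta>2 = min \<eta>1 \<epsilon>"
  have eta2: "0 < \<eta>2" "\<eta>2 \<le> \<eta>1" "\<eta>2 \<le> dl" "\<eta>2 \<le> \<epsilon>" unfolding \<eta>2_def using eta1 e by auto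
  obtain a where a: "0 < a" "a \<le> \<eta>2" and aa: "\<And>q. 0 < q \<Longrightarrow> q \<le> a \<Longrightarrow> K^2 * w < integral {q..\<eta>2} ff"
    using div_int[OF eta2(1) eta2(3), of "K^2 * w"] by blast
  show ?thesis
  proof (intro exI[of _ a] conjI allI impI)
    show "0 < a" by fact
    fix t \<mu> :: real assume t: "0 \<le> t" and mu: "0 < \<mu>" and Kmu: "K * \<mu> \<le> a"
      and rK: "rr t (K * \<mu>) \<le> K^2 * w"
    define l1 where "l1 = \<mu> / K"
    define l2 where "l2 = K * \<mu>"
    have l12a: "0 < l1" "l2 = K^2 * l1" "l2 \<le> a"
      using K mu Kmu unfolding l1_def l2_def by (auto simp: power2_eq_square)
    have l12b: "l1 \<le> l2" using l12a K2 by (metis mult_le_cancel_right1 less_imp_le not_le)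
    have l2p: "0 < l2" using l12a l12b by linarith
    have l2d: "l2 \<le> dl" "l1 \<le> dl" using l12a l12b a eta2 by linarith+
    have rK2: "rr t l2 \<le> K^2 * w" using rK unfolding l2_def .
    have v2lo: "\<And>s. 0 \<le> s \<Longrightarrow> l2 \<le> v s l2" by (rule FI[OF b l2p l2d(1) order_refl])
    have v1lo: "\<And>s. 0 \<le> s \<Longrightarrow> l1 \<le> v s l1" by (rule FI[OF b l12a(1) l2d(2) order_refl])
    have Gneg: "Gf (v t' l) - Gf l = - rr t' l" if "0 < l" "0 \<le> t'" "0 < a'"
      "\<And>s. 0 \<le> s \<Longrightarrow> s \<le> t' \<Longrightarrow> v s l \<in> {a'..dl}" for l t' a'
      using Gform[OF that] b by simp
    have up: "v s l2 \<le> \<eta>2" if s: "0 \<le> s" "s \<le> t" for s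
    proof (rule ccontr)
      assume "\<not> v s l2 \<le> \<eta>2"
      then have gt: "\<eta>2 < v s l2" by simp
      define T where "T = {x \<in> {0..s}. \<eta>2 \<le> v x l2}"
      have cl: "closed T" unfolding T_def
        by (rule continuous_on_closed_Collect_le) (use l2p in \<open>auto intro: v_cont_ab\<close>)
      have bd: "bounded T" unfolding T_def
        by (rule bounded_subset[OF compact_imp_bounded[OF compact_Icc[of 0 s]]]) auto
      have cpt: "compact T" using cl bd by (simp add: compact_eq_bounded_closed)
      have "s \<in> T" unfolding T_def using s gt by simp
      then obtain \<tau> where tau: "\<tau> \<in> T" and tmin: "\<And>y. y \<in> T \<Longrightarrow> \<tau> \<le> y"
        using compact_attains_inf[OF cpt] by blast
      have t0: "0 \<le> \<tau>" "\<tau> \<le> s" "\<eta>2 \<le> v \<tau> l2" using tau unfolding T_def by auto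
      have "\<exists>x\<ge>0. x \<le> \<tau> \<and> v x l2 = \<eta>2"
        by (rule IVT') (use t0 v_init[of l2] l2p l12a a in \<open>auto intro: v_cont_ab\<close>)
      then obtain x where x: "0 \<le> x" "x \<le> \<tau>" "v x l2 = \<eta>2" by blast
      then have "x \<in> T" unfolding T_def using t0 by auto
      then have "x = \<tau>" using tmin x by force
      then have vt: "v \<tau> l2 = \<eta>2" using x by simp
      have path: "v y l2 \<in> {l2..dl}" if y: "0 \<le> y" "y \<le> \<tau>" for y
      proof -
        have "v y l2 \<le> \<eta>2"
        proof (cases "y = \<tau>")
          case True then show ?thesis using vt by simp
        next
          case False
          then have "y < \<tau>" using y by simp
          then have "y \<notin> T" using tmin by force
          then show ?thesis unfolding T_def using y t0 by auto
        qed
        then show ?thesis using v2lo[OF y(1)] eta2 by auto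
      qed
      have "Gf (v \<tau> l2) - Gf l2 = - rr \<tau> l2" by (rule Gneg[OF l2p t0(1) l2p path])
      then have "rr \<tau> l2 = integral {l2..\<eta>2} ff"
        using Gf_diff[of l2 \<eta>2] vt l2p l12a a eta2 by simp
      then have "K^2 * w < rr \<tau> l2" using aa[OF l2p l12a(3)] by simp
      moreover have "rr \<tau> l2 \<le> rr t l2" using rr_time_mono[of l2 \<tau> t] l2p t0 s by simp
      ultimately show False using rK2 by simp
    qed
    have p2: "Gf (v t l2) - Gf l2 = - rr t l2"
      by (rule Gneg[OF l2p t l2p]) (use v2lo up eta2 in force)
    have v12: "\<And>s. 0 \<le> s \<Longrightarrow> v s l1 \<le> v s l2" using v_mono l12a l12b by simp
    have p1: "Gf (v t l1) - Gf l1 = - rr t l1"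
    proof (rule Gneg[OF l12a(1) t l12a(1)])
      fix s assume s: "0 \<le> s" "s \<le> t"
      show "v s l1 \<in> {l1..dl}" using v1lo[OF s(1)] v12[OF s(1)] up[OF s] eta2 by auto
    qed
    have i1: "0 \<le> Gf l1 - Gf l2" by (rule Gf_diff_nonneg[OF l12a(1) l12b l2d(1)])
    have vv: "0 < v t l1" "v t l1 \<le> v t l2" "v t l2 \<le> \<eta>1" "v t l2 \<le> K^2 * v t l1"
    proof -
      show "0 < v t l1" using v1lo[OF t] l12a by linarith
      show "v t l1 \<le> v t l2" by (rule v12[OF t])
      show "v t l2 \<le> \<eta>1" using up[OF t order_refl] eta2 by simp
      show "v t l2 \<le> K^2 * v t l1" using v_jensen[OF t _ K2, of l1] l12a by simp
    qed
    have i2: "Gf (v t l1) - Gf (v t l2) \<le> \<epsilon>"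
      using Gf_diff[of "v t l1" "v t l2"] sm[OF vv] vv eta1 by simp
    show "rr t (K * \<mu>) - rr t (\<mu> / K) \<le> \<epsilon>"
      using p1 p2 i1 i2 unfolding l1_def l2_def by linarith
    show "v t (K * \<mu>) \<le> \<epsilon>" using up[OF t order_refl] eta2 unfolding l2_def by simp
  qed
qed

end


context cbi
begin

lemma B1: "\<eta> > 0 \<Longrightarrow> \<forall>\<^sub>F t in at_top. w < rr t \<eta>"
  using B1_pos B1_neg b_ne by (cases "b > 0") auto

lemma B2:
  assumes "K \<ge> 1" "w \<ge> 0" "\<epsilon> > 0"
  shows "\<exists>\<eta>>0. \<forall>t\<ge>0. \<forall>\<mu>>0. K * \<mu> \<le> \<eta> \<longrightarrow> rr t (K * \<mu>) \<le> K^2 * w \<longrightarrow>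
           rr t (K * \<mu>) - rr t (\<mu> / K) \<le> \<epsilon> \<and> v t (K * \<mu>) \<le> \<epsilon>"
proof (cases "b > 0")
  case True
  then show ?thesis using B2_pos[OF True assms(1,3)] by blast
next
  case False
  then have "b < 0" using b_ne by simp
  then show ?thesis using B2_neg[OF _ assms] by blast
qed

lemma choose_theta:
  fixes x \<epsilon> :: real assumes x: "x \<ge> 0" and e: "\<epsilon> > 0"
  obtains \<theta> where "\<theta> > 0" "exp (2 * \<theta>) < 1 + \<epsilon>" "1 - \<epsilon> / 2 < exp (- (x + 1) * \<theta>)"
proof -
  have l1: "((\<lambda>\<theta>. exp (2 * \<theta>)) \<longlongrightarrow> exp (2 * 0)) (at_right (0::real))"
    by (intro tendsto_intros)
  have l2: "((\<lambda>\<theta>. exp (- (x + 1) * \<theta>)) \<longlongrightarrow> exp (- (x + 1) * 0)) (at_right (0::real))"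
    by (intro tendsto_intros)
  have "\<forall>\<^sub>F \<theta> in at_right 0. exp (2 * \<theta>) < 1 + \<epsilon>"
    using order_tendstoD(2)[OF l1, of "1 + \<epsilon>"] e by simp
  moreover have "\<forall>\<^sub>F \<theta> in at_right 0. 1 - \<epsilon> / 2 < exp (- (x + 1) * \<theta>)"
    using order_tendstoD(1)[OF l2, of "1 - \<epsilon> / 2"] e by simp
  ultimately have "\<forall>\<^sub>F \<theta> in at_right 0. exp (2 * \<theta>) < 1 + \<epsilon> \<and> 1 - \<epsilon> / 2 < exp (- (x + 1) * \<theta>)"
    by (rule eventually_conj)
  then obtain c where c: "c > 0" and cc: "\<And>y. 0 < y \<Longrightarrow> y < c \<Longrightarrow> exp (2 * y) < 1 + \<epsilon> \<and> 1 - \<epsilon> / 2 < exp (- (x + 1) * y)"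
    unfolding eventually_at_right[OF zero_less_one] by blast
  show ?thesis using cc[of "c/2"] c by (intro that[of "c/2"]) auto
qed

lemma tail_limit:
  assumes x: "x \<ge> 0" and w: "w > 0"
  shows "((\<lambda>t. measure (P x) {\<omega> \<in> space (P x). ereal w < r_recip \<Phi> v t (Y t \<omega>)}) \<longlongrightarrow> exp (- w)) at_top"
proof (rule tendstoI)
  fix \<epsilon> :: real assume e: "\<epsilon> > 0"
  interpret M: prob_space "P x" using CBI_prob[OF x] .
  obtain \<theta> where th: "\<theta> > 0" "exp (2 * \<theta>) < 1 + \<epsilon>" "1 - \<epsilon> / 2 < exp (- (x + 1) * \<theta>)"
    using choose_theta[OF x e] by blast
  define K where "K = max 2 (max (1 / \<theta>) (ln (2 / \<epsilon>) + 1))"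
  have K2: "K \<ge> 2" unfolding K_def by simp
  have K0: "K > 0" using K2 by simp
  have Kth: "1 / K \<le> \<theta>"
  proof -
    have "1 / \<theta> \<le> K" unfolding K_def by simp
    then show ?thesis using th(1) K0 by (simp add: field_simps)
  qed
  have Ke: "exp (- K) < \<epsilon> / 2"
  proof -
    have "ln (2 / \<epsilon>) < K" unfolding K_def by simp
    then have "- K < ln (\<epsilon> / 2)" using e by (simp add: ln_div)
    then have "exp (- K) < exp (ln (\<epsilon> / 2))" by simp
    then show ?thesis using e by simp
  qed
  obtain \<eta> where eta: "\<eta> > 0" and Heta: "\<And>t \<mu>. t \<ge> 0 \<Longrightarrow> \<mu> > 0 \<Longrightarrow> K * \<mu> \<le> \<eta> \<Longrightarrow> rr t (K * \<mu>) \<le> K^2 * w \<Longrightarrow>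
           rr t (K * \<mu>) - rr t (\<mu> / K) \<le> \<theta> \<and> v t (K * \<mu>) \<le> \<theta>"
    using B2[of K w \<theta>] K2 w th(1) by auto
  have ev: "\<forall>\<^sub>F t in at_top. w < rr t (\<eta> / K)" by (rule B1) (use eta K0 in simp)
  show "\<forall>\<^sub>F t in at_top. dist (measure (P x) {\<omega> \<in> space (P x). ereal w < r_recip \<Phi> v t (Y t \<omega>)}) (exp (- w)) < \<epsilon>"
    using ev eventually_ge_at_top[of 0]
  proof eventually_elim
    case (elim t)
    have t: "t \<ge> 0" and big: "w < rr t (\<eta> / K)" using elim by auto
    define S where "S = {l. 0 \<le> l \<and> rr t l \<le> w}"
    obtain l0 where l0: "l0 > 0" "rr t l0 \<le> w" using rr_small[OF t w] by blast
    have l0S: "l0 \<in> S" unfolding S_def using l0 by simp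
    have Sbd: "l \<le> \<eta> / K" if "l \<in> S" for l
    proof (rule ccontr)
      assume "\<not> l \<le> \<eta> / K"
      then have "rr t (\<eta> / K) \<le> rr t l" using rr_mono[OF t, of "\<eta> / K" l] eta K0 by simp
      then show False using that big unfolding S_def by simp
    qed
    have bdd: "bdd_above S" using Sbd unfolding bdd_above_def by blast
    have Sne: "S \<noteq> {}" using l0S by blast
    define \<mu> where "\<mu> = Sup S"
    have mu_pos: "0 < \<mu>" using cSup_upper[OF l0S bdd] l0 unfolding \<mu>_def by simp
    have mu_le: "\<mu> \<le> \<eta> / K" unfolding \<mu>_def using Sne Sbd by (intro cSup_least) auto
    have below: "rr t l \<le> w" if "0 \<le> l" "l < \<mu>" for l
    proof -
      obtain s where s: "s \<in> S" "l < s" using \<open>l < \<mu>\<close> less_cSup_iff[OF Sne bdd] unfolding \<mu>_def by blast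
      then show ?thesis using rr_mono[OF t that(1), of s] unfolding S_def by simp
    qed
    have above: "w < rr t l" if "\<mu> < l" for l
    proof (rule ccontr)
      assume "\<not> w < rr t l"
      then have "l \<in> S" unfolding S_def using that mu_pos by simp
      then show False using cSup_upper[OF _ bdd, of l] that unfolding \<mu>_def by simp
    qed
    define l1 where "l1 = \<mu> / K"
    define l2 where "l2 = K * \<mu>"
    have l1p: "0 < l1" "l1 < \<mu>" unfolding l1_def using mu_pos K2 by (auto simp: divide_less_eq)
    have l2p: "\<mu> < l2" "0 < l2" unfolding l2_def using mu_pos K2 by auto
    have r1: "rr t l1 \<le> w" using below l1p by simp
    have r2: "w < rr t l2" using above l2p by simp
    have r3: "rr t l2 \<le> K^2 * w"
    proof -
      have "K^2 * l1 = l2" unfolding l1_def l2_def using K0 by (simp add: power2_eq_square)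
      then have "rr t l2 \<le> K^2 * rr t l1" using rr_jensen[OF t, of l1 "K^2"] l1p K2 by (simp add: one_le_power)
      also have "\<dots> \<le> K^2 * w" using r1 by (intro mult_left_mono) auto
      finally show ?thesis .
    qed
    have Kmu: "K * \<mu> \<le> \<eta>" using mu_le K0 by (simp add: field_simps)
    from Heta[OF t mu_pos Kmu r3[unfolded l2_def]]
    have D: "rr t l2 - rr t l1 \<le> \<theta>" and vK: "v t l2 \<le> \<theta>" unfolding l1_def l2_def by auto
    have Ym[measurable]: "Y t \<in> borel_measurable (P x)" using CBI_meas[OF x t] .
    define E where "E = {\<omega> \<in> space (P x). ereal w < r_recip \<Phi> v t (Y t \<omega>)}"
    define A where "A = {\<omega> \<in> space (P x). Y t \<omega> < 1 / \<mu>}"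
    define B where "B = {\<omega> \<in> space (P x). \<mu> * Y t \<omega> \<le> 1}"
    have Am: "A \<in> sets (P x)" unfolding A_def by measurable
    have Bm: "B \<in> sets (P x)" unfolding B_def by measurable
    have Em: "E \<in> sets (P x)"
    proof -
      have "E = space (P x) - {\<omega> \<in> space (P x). r_recip \<Phi> v t (Y t \<omega>) \<le> ereal w}"
        unfolding E_def by auto
      then show ?thesis using event_meas[OF x t, of w] by auto
    qed
    have AE: "A \<subseteq> E"
    proof
      fix \<omega> assume "\<omega> \<in> A"
      then have om: "\<omega> \<in> space (P x)" "Y t \<omega> < 1 / \<mu>" unfolding A_def by auto
      have Y0: "0 \<le> Y t \<omega>" using CBI_nonneg[OF x t om(1)] .
      show "\<omega> \<in> E"
      proof (cases "Y t \<omega> = 0")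
        case True
        have "ereal w < ereal (rr t l2)" using r2 by simp
        also have "\<dots> \<le> r_inf \<Phi> v t" using r_inf_ge[OF t] l2p by simp
        finally show ?thesis using True om unfolding E_def r_recip_def by simp
      next
        case False
        then have Yp: "0 < Y t \<omega>" using Y0 by simp
        have "\<mu> < 1 / Y t \<omega>" using om(2) Yp mu_pos by (simp add: field_simps)
        then have "w < rr t (1 / Y t \<omega>)" by (rule above)
        then show ?thesis using False om unfolding E_def r_recip_def by simp
      qed
    qed
    have EB: "E \<subseteq> B"
    proof
      fix \<omega> assume "\<omega> \<in> E"
      then have om: "\<omega> \<in> space (P x)" "ereal w < r_recip \<Phi> v t (Y t \<omega>)" unfolding E_def by auto
      have Y0: "0 \<le> Y t \<omega>" using CBI_nonneg[OF x t om(1)] .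
      show "\<omega> \<in> B"
      proof (rule ccontr)
        assume "\<omega> \<notin> B"
        then have gt: "1 < \<mu> * Y t \<omega>" using om unfolding B_def by auto
        then have Yp: "0 < Y t \<omega>" using Y0 mu_pos by (cases "Y t \<omega> = 0") auto
        have "1 / Y t \<omega> < \<mu>" using gt Yp by (simp add: field_simps)
        then have "rr t (1 / Y t \<omega>) \<le> w" using Yp by (intro below) auto
        then show False using om(2) Yp unfolding r_recip_def by simp
      qed
    qed
    have PA: "measure (P x) A \<le> measure (P x) E" using AE Em by (intro M.finite_measure_mono)
    have PB: "measure (P x) E \<le> measure (P x) B" using EB Bm by (intro M.finite_measure_mono)
    have Kl2: "K * \<mu> \<ge> 0" "\<mu> / K \<ge> 0" using mu_pos K0 by auto
    have Afin: "emeasure (P x) A < \<infinity>" by (simp add: M.emeasure_eq_measure)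
    have lowI: "(\<integral>\<omega>. exp (- (K * \<mu>) * Y t \<omega>) \<partial>P x) \<le> measure (P x) A + exp (- K)"
    proof -
      have "(\<integral>\<omega>. exp (- (K * \<mu>) * Y t \<omega>) \<partial>P x) \<le> (\<integral>\<omega>. indicator A \<omega> + exp (- K) \<partial>P x)"
      proof (rule integral_mono)
        show "integrable (P x) (\<lambda>\<omega>. exp (- (K * \<mu>) * Y t \<omega>))" by (rule lap_int[OF x t Kl2(1)])
        show "integrable (P x) (\<lambda>\<omega>. indicator A \<omega> + exp (- K))"
          using Am Afin by (intro Bochner_Integration.integrable_add integrable_real_indicator M.integrable_const) auto
        fix \<omega> assume om: "\<omega> \<in> space (P x)"
        have Y0: "0 \<le> Y t \<omega>" using CBI_nonneg[OF x t om] .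
        show "exp (- (K * \<mu>) * Y t \<omega>) \<le> indicator A \<omega> + exp (- K)"
        proof (cases "\<omega> \<in> A")
          case True
          have "exp (- (K * \<mu>) * Y t \<omega>) \<le> 1" using Y0 Kl2 by (simp add: mult_nonneg_nonneg)
          then show ?thesis using True by (simp add: add_increasing2)
        next
          case False
          then have "1 / \<mu> \<le> Y t \<omega>" using om unfolding A_def by auto
          then have "1 \<le> \<mu> * Y t \<omega>" using mu_pos by (simp add: field_simps)
          then have "K * 1 \<le> K * (\<mu> * Y t \<omega>)" using K0 by (intro mult_left_mono) auto
          then have "K \<le> K * \<mu> * Y t \<omega>" by (simp add: mult.assoc)
          then have "exp (- (K * \<mu>) * Y t \<omega>) \<le> exp (- K)" by simp
          then show ?thesis using False by simp
        qed
      qed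
      also have "\<dots> = measure (P x) A + exp (- K)"
      proof -
        have iA: "integrable (P x) (\<lambda>\<omega>. indicator A \<omega> :: real)" by (rule integrable_real_indicator[OF Am Afin])
        have "(\<integral>\<omega>. indicator A \<omega> + exp (- K) \<partial>P x) = (\<integral>\<omega>. indicator A \<omega> \<partial>P x) + (\<integral>\<omega>. exp (- K) \<partial>P x)"
          by (rule Bochner_Integration.integral_add[OF iA]) simp
        then show ?thesis using Am by (simp add: M.prob_space)
      qed
      finally show ?thesis .
    qed
    have upI: "measure (P x) B \<le> exp (1 / K) * (\<integral>\<omega>. exp (- (\<mu> / K) * Y t \<omega>) \<partial>P x)"
    proof -
      have "measure (P x) B = (\<integral>\<omega>. indicator B \<omega> \<partial>P x)" using Bm by simp
      also have "\<dots> \<le> (\<integral>\<omega>. exp (1 / K) * exp (- (\<mu> / K) * Y t \<omega>) \<partial>P x)"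
      proof (rule integral_mono)
        show "integrable (P x) (\<lambda>\<omega>. indicator B \<omega> :: real)"
          using Bm by (intro integrable_real_indicator) (auto simp: M.emeasure_eq_measure)
        show "integrable (P x) (\<lambda>\<omega>. exp (1 / K) * exp (- (\<mu> / K) * Y t \<omega>))"
          by (intro integrable_mult_right lap_int[OF x t Kl2(2)])
        fix \<omega> assume om: "\<omega> \<in> space (P x)"
        show "indicator B \<omega> \<le> exp (1 / K) * exp (- (\<mu> / K) * Y t \<omega>)"
        proof (cases "\<omega> \<in> B")
          case True
          then have "\<mu> * Y t \<omega> \<le> 1" unfolding B_def by auto
          then have "(\<mu> / K) * Y t \<omega> \<le> 1 / K" using K0 by (simp add: field_simps)
          then have "0 \<le> 1 / K + (- (\<mu> / K) * Y t \<omega>)" by simp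
          then have "1 \<le> exp (1 / K + (- (\<mu> / K) * Y t \<omega>))" by simp
          also have "\<dots> = exp (1 / K) * exp (- (\<mu> / K) * Y t \<omega>)" by (rule exp_add)
          finally show ?thesis using True by simp
        next
          case False
          then show ?thesis by simp
        qed
      qed
      also have "\<dots> = exp (1 / K) * (\<integral>\<omega>. exp (- (\<mu> / K) * Y t \<omega>) \<partial>P x)" by simp
      finally show ?thesis .
    qed
    have lapK: "(\<integral>\<omega>. exp (- (K * \<mu>) * Y t \<omega>) \<partial>P x) = exp (- x * v t l2 - rr t l2)"
      using lap[OF x t Kl2(1)] unfolding l2_def .
    have lap1: "(\<integral>\<omega>. exp (- (\<mu> / K) * Y t \<omega>) \<partial>P x) = exp (- x * v t l1 - rr t l1)"
      using lap[OF x t Kl2(2)] unfolding l1_def .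
    have low: "exp (- w) - \<epsilon> < measure (P x) E"
    proof -
      have "x * v t l2 \<le> x * \<theta>" using vK x by (intro mult_left_mono) auto
      moreover have "rr t l2 \<le> w + \<theta>" using D r1 by linarith
      ultimately have "- (x + 1) * \<theta> + (- w) \<le> - x * v t l2 - rr t l2" by (simp add: algebra_simps)
      then have "exp (- (x + 1) * \<theta>) * exp (- w) \<le> exp (- x * v t l2 - rr t l2)"
        by (simp flip: exp_add)
      moreover have "(1 - \<epsilon> / 2) * exp (- w) < exp (- (x + 1) * \<theta>) * exp (- w)"
        using th(3) by (intro mult_strict_right_mono) auto
      moreover have "exp (- w) - \<epsilon> / 2 \<le> (1 - \<epsilon> / 2) * exp (- w)"
      proof -
        have "\<epsilon> / 2 * exp (- w) \<le> \<epsilon> / 2 * 1" using e w by (intro mult_left_mono) auto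
        then show ?thesis by (simp add: algebra_simps)
      qed
      ultimately have "exp (- w) - \<epsilon> / 2 < exp (- x * v t l2 - rr t l2)"
        by linarith
      then show ?thesis using lowI lapK PA Ke by linarith
    qed
    have up: "measure (P x) E < exp (- w) + \<epsilon>"
    proof -
      have "0 \<le> x * v t l1" using x v_nonneg[OF t] l1p by simp
      moreover have "w - \<theta> < rr t l1" using D r2 by linarith
      ultimately have "- x * v t l1 - rr t l1 \<le> \<theta> - w" by simp
      then have "exp (- x * v t l1 - rr t l1) \<le> exp (\<theta> - w)" by simp
      moreover have "exp (1 / K) \<le> exp \<theta>" using Kth by simp
      ultimately have "exp (1 / K) * exp (- x * v t l1 - rr t l1) \<le> exp \<theta> * exp (\<theta> - w)"
        by (intro mult_mono) auto
      also have "\<dots> = exp (2 * \<theta>) * exp (- w)" by (simp flip: exp_add)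
      also have "\<dots> < (1 + \<epsilon>) * exp (- w)" using th(2) by (intro mult_strict_right_mono) auto
      also have "\<dots> \<le> exp (- w) + \<epsilon>"
      proof -
        have "\<epsilon> * exp (- w) \<le> \<epsilon> * 1" using e w by (intro mult_left_mono) auto
        then show ?thesis by (simp add: algebra_simps)
      qed
      finally show ?thesis using upI[unfolded lap1] PB by linarith
    qed
    show ?case using low up unfolding E_def by (simp add: dist_real_def abs_less_iff)
  qed
qed

end


lemma cdf_exp1: "cdf (density lborel (exponential_density 1)) z = (if 0 \<le> z then 1 - exp (- z) else 0)"
proof -
  have "cdf (density lborel (exponential_density 1)) z = enn2real (emeasure (density lborel (exponential_density 1)) {..z})"
    by (simp add: cdf_def2 measure_def)
  also have "\<dots> = erlang_CDF 0 1 z" using emeasure_erlang_density[of 1 0 z] by simp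
  finally show ?thesis by (simp add: erlang_CDF_0)
qed

context cbi
begin

lemma r_recip_nonneg:
  assumes t: "t \<ge> 0" and y: "y \<ge> 0"
  shows "0 \<le> r_recip \<Phi> v t y"
proof (cases "y = 0")
  case True
  have "ereal 0 \<le> ereal (rr t 0)" using rr_nonneg[OF t, of 0] by simp
  also have "\<dots> \<le> r_inf \<Phi> v t" by (rule r_inf_ge[OF t]) simp
  finally show ?thesis using True by (simp add: r_recip_def zero_ereal_def)
next
  case False
  then show ?thesis using rr_nonneg[OF t, of "1 / y"] y by (simp add: r_recip_def)
qed

lemma compl_eq:
  assumes x: "x \<ge> 0" and t: "t \<ge> 0"
  shows "measure (P x) {\<omega> \<in> space (P x). r_recip \<Phi> v t (Y t \<omega>) \<le> ereal z}
       = 1 - measure (P x) {\<omega> \<in> space (P x). ereal z < r_recip \<Phi> v t (Y t \<omega>)}"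
proof -
  interpret M: prob_space "P x" using CBI_prob[OF x] .
  have "{\<omega> \<in> space (P x). ereal z < r_recip \<Phi> v t (Y t \<omega>)} = space (P x) - {\<omega> \<in> space (P x). r_recip \<Phi> v t (Y t \<omega>) \<le> ereal z}"
    by auto
  then show ?thesis using M.prob_compl[OF event_meas[OF x t, of z]] by simp
qed

lemma main_limit:
  assumes x: "x \<ge> 0"
  shows "((\<lambda>t. measure (P x) {\<omega> \<in> space (P x). r_recip \<Phi> v t (Y t \<omega>) \<le> ereal z})
             \<longlongrightarrow> cdf (density lborel (exponential_density 1)) z) at_top"
proof -
  interpret M: prob_space "P x" using CBI_prob[OF x] .
  let ?f = "\<lambda>z t. measure (P x) {\<omega> \<in> space (P x). r_recip \<Phi> v t (Y t \<omega>) \<le> ereal z}"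
  have pos: "((\<lambda>t. ?f w t) \<longlongrightarrow> 1 - exp (- w)) at_top" if w: "w > 0" for w
  proof -
    have lim: "((\<lambda>t. 1 - measure (P x) {\<omega> \<in> space (P x). ereal w < r_recip \<Phi> v t (Y t \<omega>)}) \<longlongrightarrow> 1 - exp (- w)) at_top"
      by (intro tendsto_intros tail_limit[OF x w])
    moreover have ev: "\<forall>\<^sub>F t in at_top. 1 - measure (P x) {\<omega> \<in> space (P x). ereal w < r_recip \<Phi> v t (Y t \<omega>)} = ?f w t"
      using eventually_ge_at_top[of 0] by eventually_elim (use compl_eq[OF x] in simp)
    from lim show ?thesis unfolding tendsto_cong[OF ev] .
  qed
  consider "z > 0" | "z < 0" | "z = 0" by linarith
  then show ?thesis
  proof cases
    case 1
    then show ?thesis using pos[OF 1] by (simp add: cdf_exp1)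
  next
    case 2
    have "\<forall>\<^sub>F t in at_top. ?f z t = 0"
      using eventually_ge_at_top[of 0]
    proof eventually_elim
      case (elim t)
      have "{\<omega> \<in> space (P x). r_recip \<Phi> v t (Y t \<omega>) \<le> ereal z} = {}"
      proof safe
        fix \<omega> assume om: "\<omega> \<in> space (P x)" "r_recip \<Phi> v t (Y t \<omega>) \<le> ereal z"
        have "0 \<le> r_recip \<Phi> v t (Y t \<omega>)" by (rule r_recip_nonneg[OF elim CBI_nonneg[OF x elim om(1)]])
        from this om(2) have "(0::ereal) \<le> ereal z" by (rule order_trans)
        then show "\<omega> \<in> {}" using 2 by simp
      qed
      then show ?case by (simp only: measure_empty)
    qed
    then have "((\<lambda>t. ?f z t) \<longlongrightarrow> 0) at_top" by (rule tendsto_eventually)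
    then show ?thesis using 2 by (simp add: cdf_exp1)
  next
    case 3
    have "((\<lambda>t. ?f 0 t) \<longlongrightarrow> 0) at_top"
    proof (rule tendstoI)
      fix \<epsilon> :: real assume e: "\<epsilon> > 0"
      define w where "w = \<epsilon> / 2"
      have w: "w > 0" unfolding w_def using e by simp
      have "1 - exp (- w) \<le> w" using exp_ge_add_one_self[of "- w"] by simp
      then have lt: "1 - exp (- w) < \<epsilon>" unfolding w_def using e by simp
      have "\<forall>\<^sub>F t in at_top. ?f w t < \<epsilon>" by (rule order_tendstoD(2)[OF pos[OF w] lt])
      then show "\<forall>\<^sub>F t in at_top. dist (?f 0 t) 0 < \<epsilon>"
        using eventually_ge_at_top[of 0]
      proof eventually_elim
        case (elim t)
        have sub: "{\<omega> \<in> space (P x). r_recip \<Phi> v t (Y t \<omega>) \<le> ereal 0} \<subseteq> {\<omega> \<in> space (P x). r_recip \<Phi> v t (Y t \<omega>) \<le> ereal w}"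
        proof safe
          fix \<omega> assume "r_recip \<Phi> v t (Y t \<omega>) \<le> ereal 0"
          moreover have "ereal 0 \<le> ereal w" using w by simp
          ultimately show "r_recip \<Phi> v t (Y t \<omega>) \<le> ereal w" by (rule order_trans)
        qed
        have "?f 0 t \<le> ?f w t"
          by (rule M.finite_measure_mono[OF sub event_meas[OF x elim(2)]])
        then show ?case using elim by simp
      qed
    qed
    then show ?thesis using 3 by (simp add: cdf_exp1)
  qed
qed

end


theorem theorem4:
  fixes \<sigma> b \<beta> :: real
    and \<pi> \<nu> :: "real measure"
    and v :: "real \<Rightarrow> real \<Rightarrow> real"
    and P :: "real \<Rightarrow> 'a measure"
    and Y :: "real \<Rightarrow> 'a \<Rightarrow> real"
  defines "\<Psi> \<equiv> Psi_mech b \<sigma> \<pi>"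
      and "\<Phi> \<equiv> Phi_mech \<beta> \<nu>"
  assumes sigma_nonneg: "\<sigma> \<ge> 0"
      and beta_nonneg: "\<beta> \<ge> 0"
      and pi_sets: "sets \<pi> = sets borel"
      and pi_sfin: "sigma_finite_measure \<pi>"
      and pi_supp: "emeasure \<pi> {..0} = 0"
      and pi_int: "(\<integral>\<^sup>+ z. ennreal (min z (z^2)) \<partial>\<pi>) < \<infinity>"
      and nu_sets: "sets \<nu> = sets borel"
      and nu_sfin: "sigma_finite_measure \<nu>"
      and nu_supp: "emeasure \<nu> {..0} = 0"
      and nu_int: "(\<integral>\<^sup>+ z. ennreal (min 1 z) \<partial>\<nu>) < \<infinity>"
      and Phi_pos: "\<And>q. q > 0 \<Longrightarrow> \<Phi> q > 0"
      and v_init: "\<And>l. l \<ge> 0 \<Longrightarrow> v 0 l = l"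
      and v_ode: "\<And>l t. l \<ge> 0 \<Longrightarrow> t \<ge> 0 \<Longrightarrow>
                    ((\<lambda>s. v s l) has_real_derivative (- \<Psi> (v t l))) (at t within {0..})"
      and b_ne: "b \<noteq> 0"
      and diverge: "\<And>\<epsilon>. \<epsilon> > 0 \<Longrightarrow>
                    (\<integral>\<^sup>+ u. indicator {0<..<\<epsilon>} u * ennreal (\<Phi> u / \<bar>\<Psi> u\<bar>) \<partial>lborel) = \<infinity>"
      and CBI: "is_CBI \<Phi> v P Y"
  shows "\<And>x z. x \<ge> 0 \<Longrightarrow>
           ((\<lambda>t. measure (P x) {\<omega> \<in> space (P x). r_recip \<Phi> v t (Y t \<omega>) \<le> ereal z})
             \<longlongrightarrow> cdf (density lborel (exponential_density 1)) z) at_top"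
proof -
  interpret cbi \<sigma> b \<beta> \<pi> \<nu> v P Y
  proof (unfold_locales)
    show "\<beta> \<ge> 0" by (rule beta_nonneg)
    show "sets \<pi> = sets borel" by (rule pi_sets)
    show "emeasure \<pi> {..0} = 0" by (rule pi_supp)
    show "(\<integral>\<^sup>+ z. ennreal (min z (z^2)) \<partial>\<pi>) < \<infinity>" by (rule pi_int)
    show "sets \<nu> = sets borel" by (rule nu_sets)
    show "emeasure \<nu> {..0} = 0" by (rule nu_supp)
    show "(\<integral>\<^sup>+ z. ennreal (min 1 z) \<partial>\<nu>) < \<infinity>" by (rule nu_int)
    show "\<And>q. q > 0 \<Longrightarrow> Phi_mech \<beta> \<nu> q > 0" using Phi_pos unfolding \<Phi>_def .
    show "\<And>l. l \<ge> 0 \<Longrightarrow> v 0 l = l" by (rule v_init)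
    show "\<And>l t. l \<ge> 0 \<Longrightarrow> t \<ge> 0 \<Longrightarrow>
            ((\<lambda>s. v s l) has_real_derivative (- Psi_mech b \<sigma> \<pi> (v t l))) (at t within {0..})"
      using v_ode unfolding \<Psi>_def .
    show "b \<noteq> 0" by (rule b_ne)
    show "\<And>\<epsilon>. \<epsilon> > 0 \<Longrightarrow>
            (\<integral>\<^sup>+ u. indicator {0<..<\<epsilon>} u * ennreal (Phi_mech \<beta> \<nu> u / \<bar>Psi_mech b \<sigma> \<pi> u\<bar>) \<partial>lborel) = \<infinity>"
      using diverge unfolding \<Psi>_def \<Phi>_def .
    show "is_CBI (Phi_mech \<beta> \<nu>) v P Y" using CBI unfolding \<Phi>_def .
  qed
  show "\<And>x z. x \<ge> 0 \<Longrightarrow>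
           ((\<lambda>t. measure (P x) {\<omega> \<in> space (P x). r_recip \<Phi> v t (Y t \<omega>) \<le> ereal z})
             \<longlongrightarrow> cdf (density lborel (exponential_density 1)) z) at_top"
    unfolding \<Phi>_def by (rule main_limit)
qed

end
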